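(* Let $S,T$ be positive invertible operators on a Hilbert space and let $0\le p\le 1$. Then $$W_p(S,T)\le 2p(1-p)\left(S\nabla T-S\sharp T\right)+L(S,T)$$ in the Loewner order.
   Context: For positive invertible $S,T$ and $t\in[0,1]$: $S\sharp_tT=S^{1/2}(S^{-1/2}TS^{-1/2})^tS^{1/2}$, $S\sharp T=S\sharp_{1/2}T$, $S\nabla T=\frac{S+T}{2}$, $Hz_p(S,T)=\frac12(S\sharp_pT+S\sharp_{1-p}T)$, and $L(S,T)=\int_0^1 S\sharp_tT\,dt$. The operator Wigner--Yanase--Dyson function is $W_p(S,T)=\frac{p(1-p)}{2}(S-T)\left(S\nabla T-Hz_p(S,T)\right)^{-1}(S-T)$ for $S\ne T$ (whenever the inverse exists) and $W_p(S,S)=S$; in general it is understood as $W_p(S,T)=S^{1/2}f_p(S^{-1/2}TS^{-1/2})S^{1/2}$ with $f_p(x)=\frac{p(1-p)(x-1)^2}{(x^p-1)(x^{1-p}-1)}$ for $x\ne1$, $f_p(1)=1$, $f_0(x)=f_1(x)=\frac{x-1}{\log x}$, which agrees with the formula above when the inverse exists. *)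

theory Defs
  imports "HOL-Analysis.Analysis"
begin

type_synonym 'a op = "'a \<Rightarrow>\<^sub>L 'a"

fun op_pow :: "'a::real_normed_vector op \<Rightarrow> nat \<Rightarrow> 'a op" where
  "op_pow A 0 = id_blinfun"
| "op_pow A (Suc n) = A o\<^sub>L op_pow A n"

definition selfadjoint :: "'a::real_inner op \<Rightarrow> bool" where
  "selfadjoint A \<longleftrightarrow> (\<forall>x y. inner (A x) y = inner x (A y))"

definition positive_op :: "'a::real_inner op \<Rightarrow> bool" where
  "positive_op A \<longleftrightarrow> selfadjoint A \<and> (\<forall>x. 0 \<le> inner (A x) x)"

definition invertible_op :: "'a::real_normed_vector op \<Rightarrow> bool" where
  "invertible_op A \<longleftrightarrow> (\<exists>B. A o\<^sub>L B = id_blinfun \<and> B o\<^sub>L A = id_blinfun)"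

definition inv_op :: "'a::real_normed_vector op \<Rightarrow> 'a op" where
  "inv_op A = (THE B. A o\<^sub>L B = id_blinfun \<and> B o\<^sub>L A = id_blinfun)"

definition loewner_le :: "'a::real_inner op \<Rightarrow> 'a op \<Rightarrow> bool" where
  "loewner_le A B \<longleftrightarrow> positive_op (B - A)"

(* Continuous functional calculus for a positive invertible operator A.
  Its spectrum lies in [a,b] with a = 1/norm(inv A) (the minimum of the spectrum) and
  b = norm A (the maximum).  f(A) is the norm limit of the Bernstein polynomials of f on [a,b]
  evaluated at A (these converge uniformly to f on [a,b] for continuous f, hence in operator
  norm at A).  If a = b, then A = a I and f(A) = f(a) I. *)
definition bernstein_op :: "(real \<Rightarrow> real) \<Rightarrow> real \<Rightarrow> real \<Rightarrow> nat \<Rightarrow> 'a::real_normed_vector op \<Rightarrow> 'a op" where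
  "bernstein_op f a b n A =
     (\<Sum>k\<le>n. (f (a + real k * (b - a) / real n) * real (n choose k)) *\<^sub>R
        (op_pow ((1 / (b - a)) *\<^sub>R (A - a *\<^sub>R id_blinfun)) k o\<^sub>L
         op_pow ((1 / (b - a)) *\<^sub>R (b *\<^sub>R id_blinfun - A)) (n - k)))"

definition opfun :: "(real \<Rightarrow> real) \<Rightarrow> 'a::{real_inner,complete_space} op \<Rightarrow> 'a op" where
  "opfun f A =
     (let a = 1 / norm (inv_op A); b = norm A in
      if a = b then f a *\<^sub>R id_blinfun
      else lim (\<lambda>n. bernstein_op f a b n A))"

definition wgmean :: "'a::{real_inner,complete_space} op \<Rightarrow> real \<Rightarrow> 'a op \<Rightarrow> 'a op" where
  "wgmean S t T =
     (let Sh = opfun (\<lambda>x. x powr (1/2)) S; Smh = opfun (\<lambda>x. x powr (-1/2)) S in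
      Sh o\<^sub>L opfun (\<lambda>x. x powr t) (Smh o\<^sub>L T o\<^sub>L Smh) o\<^sub>L Sh)"

definition gmean :: "'a::{real_inner,complete_space} op \<Rightarrow> 'a op \<Rightarrow> 'a op" where
  "gmean S T = wgmean S (1/2) T"

definition amean :: "'a::{real_inner,complete_space} op \<Rightarrow> 'a op \<Rightarrow> 'a op" where
  "amean S T = (1/2) *\<^sub>R (S + T)"

definition heinz :: "real \<Rightarrow> 'a::{real_inner,complete_space} op \<Rightarrow> 'a op \<Rightarrow> 'a op" where
  "heinz p S T = (1/2) *\<^sub>R (wgmean S p T + wgmean S (1 - p) T)"

definition logmean :: "'a::{real_inner,complete_space} op \<Rightarrow> 'a op \<Rightarrow> 'a op" where
  "logmean S T = integral {0..1::real} (\<lambda>t. wgmean S t T)"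

definition fWYD :: "real \<Rightarrow> real \<Rightarrow> real" where
  "fWYD p x =
     (if x = 1 then 1
      else if p = 0 \<or> p = 1 then (x - 1) / ln x
      else p * (1 - p) * (x - 1)^2 / ((x powr p - 1) * (x powr (1 - p) - 1)))"

definition WYD :: "real \<Rightarrow> 'a::{real_inner,complete_space} op \<Rightarrow> 'a op \<Rightarrow> 'a op" where
  "WYD p S T =
     (let Sh = opfun (\<lambda>x. x powr (1/2)) S; Smh = opfun (\<lambda>x. x powr (-1/2)) S in
      Sh o\<^sub>L opfun (fWYD p) (Smh o\<^sub>L T o\<^sub>L Smh) o\<^sub>L Sh)"

end

theory Submission
  imports Defs "HOL-Computational_Algebra.Polynomial"
begin

section \<open>Basic operator algebra\<close>

lemma oL_assoc: "(A o\<^sub>L B) o\<^sub>L C = A o\<^sub>L (B o\<^sub>L C)"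
  by (rule blinfun_eqI) simp

lemma oL_add_left: "(A + B) o\<^sub>L C = (A o\<^sub>L C) + (B o\<^sub>L C)"
  by (rule blinfun_eqI) (simp add: blinfun.bilinear_simps)

lemma oL_add_right: "C o\<^sub>L (A + B) = (C o\<^sub>L A) + (C o\<^sub>L B)"
  by (rule blinfun_eqI) (simp add: blinfun.bilinear_simps)

lemma oL_diff_left: "(A - B) o\<^sub>L C = (A o\<^sub>L C) - (B o\<^sub>L C)"
  by (rule blinfun_eqI) (simp add: blinfun.bilinear_simps)

lemma oL_diff_right: "C o\<^sub>L (A - B) = (C o\<^sub>L A) - (C o\<^sub>L B)"
  by (rule blinfun_eqI) (simp add: blinfun.bilinear_simps)

lemma oL_scaleR_left: "(c *\<^sub>R A) o\<^sub>L C = c *\<^sub>R (A o\<^sub>L C)"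
  by (rule blinfun_eqI) (simp add: blinfun.bilinear_simps)

lemma oL_scaleR_right: "C o\<^sub>L (c *\<^sub>R A) = c *\<^sub>R (C o\<^sub>L A)"
  by (rule blinfun_eqI) (simp add: blinfun.bilinear_simps)

lemma oL_id_left[simp]: "id_blinfun o\<^sub>L A = A"
  by (rule blinfun_eqI) simp

lemma oL_id_right[simp]: "A o\<^sub>L id_blinfun = A"
  by (rule blinfun_eqI) simp

lemma oL_sum_left: "(\<Sum>i\<in>I. f i) o\<^sub>L C = (\<Sum>i\<in>I. f i o\<^sub>L C)"
  by (induction I rule: infinite_finite_induct) (auto simp: oL_add_left)

lemma oL_sum_right: "C o\<^sub>L (\<Sum>i\<in>I. f i) = (\<Sum>i\<in>I. C o\<^sub>L f i)"
  by (induction I rule: infinite_finite_induct) (auto simp: oL_add_right)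

lemmas oL_simps = oL_add_left oL_add_right oL_diff_left oL_diff_right oL_scaleR_left oL_scaleR_right

section \<open>Self-adjoint and positive operators\<close>

lemma selfadjoint_id[simp]: "selfadjoint id_blinfun"
  by (simp add: selfadjoint_def)

lemma selfadjoint_0[simp]: "selfadjoint 0"
  by (simp add: selfadjoint_def)

lemma selfadjoint_add: "selfadjoint A \<Longrightarrow> selfadjoint B \<Longrightarrow> selfadjoint (A + B)"
  by (simp add: selfadjoint_def blinfun.bilinear_simps inner_add_left inner_add_right)

lemma selfadjoint_diff: "selfadjoint A \<Longrightarrow> selfadjoint B \<Longrightarrow> selfadjoint (A - B)"
  by (simp add: selfadjoint_def blinfun.bilinear_simps inner_diff_left inner_diff_right)

lemma selfadjoint_scaleR: "selfadjoint A \<Longrightarrow> selfadjoint (c *\<^sub>R A)"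
  by (simp add: selfadjoint_def blinfun.bilinear_simps)

lemma selfadjoint_sum: "(\<And>i. i \<in> I \<Longrightarrow> selfadjoint (f i)) \<Longrightarrow> selfadjoint (\<Sum>i\<in>I. f i)"
  by (induction I rule: infinite_finite_induct) (auto intro: selfadjoint_add)

lemma selfadjoint_comp_comm:
  assumes "selfadjoint A" "selfadjoint B" "A o\<^sub>L B = B o\<^sub>L A"
  shows "selfadjoint (A o\<^sub>L B)"
  unfolding selfadjoint_def
proof (intro allI)
  fix x y
  have "inner ((A o\<^sub>L B) x) y = inner x ((B o\<^sub>L A) y)"
    using assms(1,2) by (simp add: selfadjoint_def)
  then show "inner ((A o\<^sub>L B) x) y = inner x ((A o\<^sub>L B) y)" using assms(3) by simp
qed

lemma selfadjoint_sandwich: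
  assumes "selfadjoint B" "selfadjoint P"
  shows "selfadjoint (B o\<^sub>L P o\<^sub>L B)"
  using assms by (simp add: selfadjoint_def)

lemma positive_sandwich:
  assumes "selfadjoint B" "positive_op P"
  shows "positive_op (B o\<^sub>L P o\<^sub>L B)"
  using assms unfolding positive_op_def
  by (auto intro: selfadjoint_sandwich) (metis selfadjoint_def)

lemma positive_id[simp]: "positive_op id_blinfun"
  by (simp add: positive_op_def)

lemma positive_0[simp]: "positive_op 0"
  by (simp add: positive_op_def)

lemma positive_add: "positive_op A \<Longrightarrow> positive_op B \<Longrightarrow> positive_op (A + B)"
  by (auto simp: positive_op_def selfadjoint_add blinfun.bilinear_simps inner_add_left)

lemma positive_scaleR: "positive_op A \<Longrightarrow> 0 \<le> c \<Longrightarrow> positive_op (c *\<^sub>R A)"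
  by (auto simp: positive_op_def selfadjoint_scaleR blinfun.bilinear_simps)

lemma positive_sum: "(\<And>i. i \<in> I \<Longrightarrow> positive_op (f i)) \<Longrightarrow> positive_op (\<Sum>i\<in>I. f i)"
  by (induction I rule: infinite_finite_induct) (auto intro: positive_add)

lemma positive_square: "selfadjoint B \<Longrightarrow> positive_op (B o\<^sub>L B)"
  using positive_sandwich[of B id_blinfun] by simp

lemma selfadjoint_inner_sym: "selfadjoint A \<Longrightarrow> inner (A x) y = inner (A y) x"
  by (simp add: selfadjoint_def inner_commute)

lemma positive_CS:
  assumes P: "positive_op P"
  shows "(inner (P x) y)^2 \<le> inner (P x) x * inner (P y) y"
proof -
  have sa: "selfadjoint P" and nn: "\<And>z. 0 \<le> inner (P z) z" using P by (auto simp: positive_op_def)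
  define a where "a = inner (P x) x"
  define b where "b = inner (P x) y"
  define c where "c = inner (P y) y"
  have sym: "inner (P y) x = b" using selfadjoint_inner_sym[OF sa] b_def by simp
  have q: "0 \<le> a + 2 * t * b + t^2 * c" for t
  proof -
    have "0 \<le> inner (P (x + t *\<^sub>R y)) (x + t *\<^sub>R y)" by (rule nn)
    also have "\<dots> = a + 2 * t * b + t^2 * c"
      using sym by (simp add: a_def b_def c_def blinfun.bilinear_simps inner_add_left inner_add_right
          power2_eq_square algebra_simps)
    finally show ?thesis .
  qed
  have a0: "0 \<le> a" "0 \<le> c" using nn a_def c_def by auto
  show ?thesis
  proof (cases "c = 0")
    case True
    have "b = 0"
    proof (rule ccontr)
      assume "b \<noteq> 0"
      have "0 \<le> a + 2 * (- (a + 1) / (2 * b)) * b" using q[of "- (a + 1) / (2 * b)"] True by simp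
      also have "\<dots> = -1" using \<open>b \<noteq> 0\<close> by (simp add: field_simps)
      finally show False by simp
    qed
    then show ?thesis using True by (simp add: a_def b_def c_def)
  next
    case False
    then have c0: "0 < c" using a0 by simp
    have "0 \<le> a + 2 * (- b / c) * b + (- b / c)^2 * c" by (rule q)
    also have "\<dots> = a - b^2 / c" using c0 by (simp add: field_simps power2_eq_square)
    finally have "b^2 / c \<le> a" by simp
    then have "b^2 \<le> a * c" using c0 by (simp add: field_simps)
    then show ?thesis by (simp add: a_def b_def c_def)
  qed
qed

lemma positive_norm_sq:
  assumes P: "positive_op P"
  shows "(norm (P x))^2 \<le> norm P * inner (P x) x"
proof -
  have sa: "selfadjoint P" using P by (simp add: positive_op_def)
  have nn: "0 \<le> inner (P x) x" using P by (simp add: positive_op_def)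
  have "(inner (P x) (P x))^2 \<le> inner (P x) x * inner (P (P x)) (P x)"
    by (rule positive_CS[OF P])
  also have "inner (P (P x)) (P x) \<le> norm P * (norm (P x))^2"
  proof -
    have "inner (P (P x)) (P x) \<le> norm (P (P x)) * norm (P x)" by (rule norm_cauchy_schwarz)
    also have "\<dots> \<le> norm P * norm (P x) * norm (P x)"
      by (intro mult_right_mono norm_blinfun) simp
    finally show ?thesis by (simp add: power2_eq_square mult.assoc)
  qed
  hence "inner (P x) x * inner (P (P x)) (P x) \<le> inner (P x) x * (norm P * (norm (P x))^2)"
    using nn by (rule mult_left_mono)
  finally have *: "((norm (P x))^2)^2 \<le> (norm P * inner (P x) x) * (norm (P x))^2"
    by (simp add: power2_norm_eq_inner algebra_simps)
  show ?thesis
  proof (cases "norm (P x) = 0")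
    case True then show ?thesis using nn by simp
  next
    case False
    then have "0 < (norm (P x))^2" by simp
    have "(norm (P x))^2 * (norm (P x))^2 \<le> (norm P * inner (P x) x) * (norm (P x))^2"
      using * by (simp only: power2_eq_square[of "(norm (P x))^2"])
    with \<open>0 < (norm (P x))^2\<close> show ?thesis by (metis mult_right_le_imp_le)
  qed
qed

lemma selfadjoint_norm_bound:
  assumes sa: "selfadjoint B" and M: "0 \<le> M"
    and bnd: "\<And>x. \<bar>inner (B x) x\<bar> \<le> M * (norm x)^2"
  shows "norm B \<le> M"
proof (rule norm_blinfun_bound[OF M])
  fix x
  have key: "4 * inner (B x) y \<le> 2 * M * ((norm x)^2 + (norm y)^2)" for y
  proof -
    have sym: "inner (B y) x = inner (B x) y" using selfadjoint_inner_sym[OF sa] by simp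
    have "4 * inner (B x) y = inner (B (x + y)) (x + y) - inner (B (x - y)) (x - y)"
      using sym by (simp add: blinfun.bilinear_simps inner_add_left inner_add_right inner_diff_left inner_diff_right)
    also have "\<dots> \<le> M * (norm (x + y))^2 + M * (norm (x - y))^2"
      using bnd[of "x+y"] bnd[of "x - y"] by linarith
    also have "\<dots> = 2 * M * ((norm x)^2 + (norm y)^2)"
      by (simp add: power2_norm_eq_inner inner_add_left inner_add_right inner_diff_left inner_diff_right
          inner_commute algebra_simps)
    finally show ?thesis .
  qed
  show "norm (B x) \<le> M * norm x"
  proof (cases "B x = 0")
    case True then show ?thesis using M by simp
  next
    case False
    then have nBx: "0 < norm (B x)" by simp
    define y where "y = (norm x / norm (B x)) *\<^sub>R B x"
    have ny: "norm y = norm x" using nBx by (simp add: y_def)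
    have "inner (B x) y = norm x * norm (B x)"
      using nBx by (simp add: y_def power2_norm_eq_inner[symmetric] power2_eq_square)
    with key[of y] ny have "4 * (norm x * norm (B x)) \<le> 4 * M * (norm x)^2" by simp
    then have "norm x * norm (B x) \<le> norm x * (M * norm x)" by (simp add: power2_eq_square algebra_simps)
    moreover have "0 < norm x" using False by (metis blinfun.zero_right zero_less_norm_iff)
    ultimately show ?thesis by simp
  qed
qed

lemma norm_id_le: "norm (id_blinfun :: 'a::real_normed_vector \<Rightarrow>\<^sub>L 'a) \<le> 1"
  by (rule norm_blinfun_bound) auto


section \<open>Polynomial calculus\<close>

definition ev :: "'a::real_normed_vector op \<Rightarrow> real poly \<Rightarrow> 'a op" where
  "ev A p = (\<Sum>i\<le>degree p. coeff p i *\<^sub>R op_pow A i)"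

lemma ev_upto:
  assumes "degree p < N"
  shows "ev A p = (\<Sum>i<N. coeff p i *\<^sub>R op_pow A i)"
proof -
  have "(\<Sum>i<N. coeff p i *\<^sub>R op_pow A i) = (\<Sum>i\<le>degree p. coeff p i *\<^sub>R op_pow A i)"
    by (rule sum.mono_neutral_right) (use assms in \<open>auto simp: coeff_eq_0\<close>)
  then show ?thesis by (simp add: ev_def)
qed

lemma ev_0[simp]: "ev A 0 = 0"
  by (simp add: ev_def)

lemma ev_pCons: "ev A (pCons c p) = c *\<^sub>R id_blinfun + (A o\<^sub>L ev A p)"
proof -
  define N where "N = Suc (degree p)"
  have d1: "degree (pCons c p) < Suc N" using degree_pCons_le[of c p] by (simp add: N_def)
  have d2: "degree p < N" by (simp add: N_def)
  have "ev A (pCons c p) = (\<Sum>i<Suc N. coeff (pCons c p) i *\<^sub>R op_pow A i)"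
    by (rule ev_upto[OF d1])
  also have "\<dots> = c *\<^sub>R id_blinfun + (\<Sum>i<N. coeff p i *\<^sub>R op_pow A (Suc i))"
    by (subst sum.lessThan_Suc_shift) simp
  also have "(\<Sum>i<N. coeff p i *\<^sub>R op_pow A (Suc i)) = A o\<^sub>L (\<Sum>i<N. coeff p i *\<^sub>R op_pow A i)"
    by (simp add: oL_sum_right oL_scaleR_right)
  also have "(\<Sum>i<N. coeff p i *\<^sub>R op_pow A i) = ev A p" by (rule ev_upto[OF d2, symmetric])
  finally show ?thesis .
qed

lemma ev_add: "ev A (p + q) = ev A p + ev A q"
proof -
  define N where "N = Suc (max (degree p) (degree q))"
  have "degree (p + q) < N" using degree_add_le_max[of p q] by (simp add: N_def)
  then have "ev A (p + q) = (\<Sum>i<N. coeff (p + q) i *\<^sub>R op_pow A i)" by (rule ev_upto)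
  also have "\<dots> = (\<Sum>i<N. coeff p i *\<^sub>R op_pow A i) + (\<Sum>i<N. coeff q i *\<^sub>R op_pow A i)"
    by (simp add: scaleR_add_left sum.distrib)
  also have "\<dots> = ev A p + ev A q"
    by (subst (1 2) ev_upto[where N=N]) (auto simp: N_def)
  finally show ?thesis .
qed

lemma ev_smult: "ev A (smult c p) = c *\<^sub>R ev A p"
proof -
  define N where "N = Suc (degree p)"
  have "degree (smult c p) < N" using degree_smult_le[of c p] by (simp add: N_def)
  then have "ev A (smult c p) = (\<Sum>i<N. coeff (smult c p) i *\<^sub>R op_pow A i)" by (rule ev_upto)
  also have "\<dots> = c *\<^sub>R (\<Sum>i<N. coeff p i *\<^sub>R op_pow A i)"
    by (simp add: scaleR_sum_right)
  also have "\<dots> = c *\<^sub>R ev A p" by (subst ev_upto[where N=N]) (auto simp: N_def)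
  finally show ?thesis .
qed

lemma ev_minus: "ev A (- p) = - ev A p"
  using ev_smult[of A "-1" p] by simp

lemma ev_diff: "ev A (p - q) = ev A p - ev A q"
  using ev_add[of A p "- q"] ev_minus[of A q] by simp

lemma ev_const: "ev A [:c:] = c *\<^sub>R id_blinfun"
  by (simp add: ev_pCons)

lemma ev_1[simp]: "ev A 1 = id_blinfun"
  by (simp add: one_pCons ev_const)

lemma ev_X: "ev A [:0, 1:] = A"
  by (simp add: ev_pCons)

lemma ev_lin: "ev A [:c, 1:] = c *\<^sub>R id_blinfun + A"
  by (simp add: ev_pCons)

lemma ev_mult: "ev A (p * q) = ev A p o\<^sub>L ev A q"
proof (induction p)
  case 0 then show ?case by simp
next
  case (pCons a p)
  have "ev A (pCons a p * q) = a *\<^sub>R ev A q + (A o\<^sub>L ev A (p * q))"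
    by (simp add: ev_add ev_smult ev_pCons)
  also have "\<dots> = ev A (pCons a p) o\<^sub>L ev A q"
    using pCons.IH by (simp add: ev_pCons oL_simps oL_assoc)
  finally show ?case .
qed

lemma ev_sum: "ev A (\<Sum>i\<in>I. f i) = (\<Sum>i\<in>I. ev A (f i))"
  by (induction I rule: infinite_finite_induct) (auto simp: ev_add)

lemma ev_power: "ev A (p ^ k) = op_pow (ev A p) k"
  by (induction k) (auto simp: ev_mult)

lemma ev_comm: "ev A p o\<^sub>L ev A q = ev A q o\<^sub>L ev A p"
  by (metis ev_mult mult.commute)

lemma ev_selfadjoint:
  assumes "selfadjoint A"
  shows "selfadjoint (ev A p)"
proof (induction p)
  case 0 then show ?case by simp
next
  case (pCons a p)
  have c: "A o\<^sub>L ev A p = ev A p o\<^sub>L A" using ev_comm[of A "[:0,1:]" p] by (simp add: ev_X)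
  show ?case unfolding ev_pCons
    by (intro selfadjoint_add selfadjoint_scaleR selfadjoint_id selfadjoint_comp_comm assms pCons.IH c)
qed

section \<open>Spectral bounds and the positive cone\<close>

definition sbound :: "'a::real_inner op \<Rightarrow> real \<Rightarrow> real \<Rightarrow> bool" where
  "sbound A a b \<longleftrightarrow> selfadjoint A \<and>
     (\<forall>x. a * (norm x)^2 \<le> inner (A x) x \<and> inner (A x) x \<le> b * (norm x)^2)"

definition uP :: "real \<Rightarrow> real \<Rightarrow> real poly" where
  "uP a b = smult (1 / (b - a)) [:- a, 1:]"

definition vP :: "real \<Rightarrow> real \<Rightarrow> real poly" where
  "vP a b = smult (1 / (b - a)) [:b, - 1:]"

lemma uv_sum: assumes "a < b" shows "uP a b + vP a b = 1"
proof -
  have e: "[:-a,1:] + [:b,-1:] = [:b - a:]" by simp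
  have "uP a b + vP a b = smult (1/(b-a)) ([:-a,1:] + [:b,-1:])"
    unfolding uP_def vP_def smult_add_right ..
  also have "\<dots> = [:(1/(b-a)) * (b - a):]" unfolding e by simp
  also have "(1/(b-a)) * (b - a) = 1" using assms by simp
  finally show ?thesis by (simp add: one_pCons)
qed

lemma poly_uP: "poly (uP a b) x = (x - a) / (b - a)"
proof -
  have "poly (uP a b) x = (1/(b-a)) * poly [:-a,1:] x" unfolding uP_def poly_smult ..
  then show ?thesis by simp
qed

lemma poly_vP: "poly (vP a b) x = (b - x) / (b - a)"
proof -
  have "poly (vP a b) x = (1/(b-a)) * poly [:b,-1:] x" unfolding vP_def poly_smult ..
  then show ?thesis by simp
qed

lemma ev_uP: "ev A (uP a b) = (1 / (b - a)) *\<^sub>R (A - a *\<^sub>R id_blinfun)"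
proof -
  have "ev A [:- a, 1:] = A - a *\<^sub>R id_blinfun"
    by (rule blinfun_eqI) (simp add: ev_pCons blinfun.bilinear_simps)
  then show ?thesis unfolding uP_def ev_smult by simp
qed

lemma ev_vP: "ev A (vP a b) = (1 / (b - a)) *\<^sub>R (b *\<^sub>R id_blinfun - A)"
proof -
  have "ev A [:b, - 1:] = b *\<^sub>R id_blinfun - A"
    by (rule blinfun_eqI) (simp add: ev_pCons blinfun.bilinear_simps)
  then show ?thesis unfolding vP_def ev_smult by simp
qed

context
  fixes A :: "'a::real_inner op" and a b :: real
  assumes sb: "sbound A a b" and ab: "a < b"
begin

lemma sb_sa: "selfadjoint A" using sb by (simp add: sbound_def)

lemma U_pos: "positive_op (ev A (uP a b))"
proof -
  have "0 \<le> inner (ev A (uP a b) x) x" for x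
  proof -
    have "inner (ev A (uP a b) x) x = (1 / (b - a)) * (inner (A x) x - a * (norm x)^2)"
      by (simp add: ev_uP blinfun.bilinear_simps inner_diff_left power2_norm_eq_inner)
    moreover have "a * (norm x)^2 \<le> inner (A x) x" using sb by (simp add: sbound_def)
    ultimately show ?thesis using ab by simp
  qed
  then show ?thesis using ev_selfadjoint[OF sb_sa] by (simp add: positive_op_def)
qed

lemma V_pos: "positive_op (ev A (vP a b))"
proof -
  have "0 \<le> inner (ev A (vP a b) x) x" for x
  proof -
    have "inner (ev A (vP a b) x) x = (1 / (b - a)) * (b * (norm x)^2 - inner (A x) x)"
      by (simp add: ev_vP blinfun.bilinear_simps inner_diff_left power2_norm_eq_inner)
    moreover have "inner (A x) x \<le> b * (norm x)^2" using sb by (simp add: sbound_def)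
    ultimately show ?thesis using ab by simp
  qed
  then show ?thesis using ev_selfadjoint[OF sb_sa] by (simp add: positive_op_def)
qed

lemma U_plus_V: "ev A (uP a b) + ev A (vP a b) = id_blinfun"
  using uv_sum[OF ab] by (metis ev_1 ev_add)

lemma U_norm: "norm (ev A (uP a b)) \<le> 1"
proof (rule selfadjoint_norm_bound[OF ev_selfadjoint[OF sb_sa]])
  fix x
  have "inner (ev A (uP a b) x) x + inner (ev A (vP a b) x) x = (norm x)^2"
  proof -
    have "ev A (uP a b) x + ev A (vP a b) x = x" using U_plus_V by (metis blinfun.add_left blinfun_apply_id_blinfun)
    then show ?thesis by (metis inner_add_left power2_norm_eq_inner)
  qed
  moreover have "0 \<le> inner (ev A (uP a b) x) x" "0 \<le> inner (ev A (vP a b) x) x"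
    using U_pos V_pos by (auto simp: positive_op_def)
  ultimately show "\<bar>inner (ev A (uP a b) x) x\<bar> \<le> 1 * (norm x)^2" by simp
qed simp

lemma UV_pos: "positive_op (ev A (uP a b * vP a b))"
proof -
  let ?U = "ev A (uP a b)"
  have V: "ev A (vP a b) = id_blinfun - ?U" using U_plus_V by (simp add: algebra_simps)
  have "0 \<le> inner (ev A (uP a b * vP a b) x) x" for x
  proof -
    have saU: "selfadjoint ?U" by (rule ev_selfadjoint[OF sb_sa])
    have "inner (ev A (uP a b * vP a b) x) x = inner (?U x) x - inner (?U (?U x)) x"
      by (simp add: ev_mult V blinfun.bilinear_simps inner_diff_left)
    also have "inner (?U (?U x)) x = (norm (?U x))^2"
      using saU by (simp add: selfadjoint_def power2_norm_eq_inner)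
    finally have eq: "inner (ev A (uP a b * vP a b) x) x = inner (?U x) x - (norm (?U x))^2" .
    have "(norm (?U x))^2 \<le> norm ?U * inner (?U x) x" by (rule positive_norm_sq[OF U_pos])
    also have "\<dots> \<le> 1 * inner (?U x) x"
      using U_norm U_pos by (intro mult_right_mono) (auto simp: positive_op_def)
    finally show ?thesis using eq by simp
  qed
  then show ?thesis using ev_selfadjoint[OF sb_sa] by (simp add: positive_op_def)
qed

lemma cone_pos: "positive_op (ev A (uP a b ^ k * vP a b ^ j))"
proof -
  define u v where "u = uP a b" and "v = vP a b"
  obtain i r where k: "k = 2 * i + r" and r: "r < 2" by (metis mod_less_divisor div_mult_mod_eq mult.commute zero_less_numeral)
  obtain l s where j: "j = 2 * l + s" and s: "s < 2" by (metis mod_less_divisor div_mult_mod_eq mult.commute zero_less_numeral)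
  define w where "w = u ^ i * v ^ l"
  have eq: "u ^ k * v ^ j = w * (u ^ r * v ^ s) * w"
    by (simp add: k j w_def power_add power_mult mult_ac power2_eq_square)
  have core: "positive_op (ev A (u ^ r * v ^ s))"
  proof -
    have "r = 0 \<or> r = 1" "s = 0 \<or> s = 1" using r s by auto
    then show ?thesis
      using U_pos V_pos UV_pos by (auto simp: u_def v_def)
  qed
  have "positive_op (ev A w o\<^sub>L ev A (u ^ r * v ^ s) o\<^sub>L ev A w)"
    by (rule positive_sandwich[OF ev_selfadjoint[OF sb_sa] core])
  then show ?thesis using eq by (simp add: ev_mult u_def v_def)
qed

end


section \<open>Scalar Bernstein facts\<close>

lemma sum_k2_Bernstein:
  "(\<Sum>k\<le>n. (real k)^2 * Bernstein n k x) = real n * (real n - 1) * x^2 + real n * x"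
proof -
  have "(\<Sum>k\<le>n. (real k)^2 * Bernstein n k x)
      = (\<Sum>k\<le>n. real k * (real k - 1) * Bernstein n k x + real k * Bernstein n k x)"
    by (rule sum.cong) (auto simp: power2_eq_square algebra_simps)
  also have "\<dots> = real n * (real n - 1) * x^2 + real n * x"
    by (simp add: sum.distrib)
  finally show ?thesis .
qed

lemma sum_lin_Bernstein:
  assumes "1 \<le> n"
  shows "(\<Sum>k\<le>n. (real k / real n) * Bernstein n k x) = x"
proof -
  have "(\<Sum>k\<le>n. (real k / real n) * Bernstein n k x) = (\<Sum>k\<le>n. real k * Bernstein n k x) / real n"
    unfolding sum_divide_distrib by (rule sum.cong) auto
  also have "\<dots> = x" using assms by simp
  finally show ?thesis .
qed

lemma sum_sq_Bernstein:
  assumes "1 \<le> n"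
  shows "(\<Sum>k\<le>n. (real k / real n)^2 * Bernstein n k x) = x^2 + x * (1 - x) / real n"
proof -
  have "(\<Sum>k\<le>n. (real k / real n)^2 * Bernstein n k x) = (\<Sum>k\<le>n. (real k)^2 * Bernstein n k x) / (real n)^2"
    by (simp add: sum_divide_distrib power_divide)
  also have "\<dots> = (real n * (real n - 1) * x^2 + real n * x) / (real n)^2"
    by (simp add: sum_k2_Bernstein)
  also have "\<dots> = x^2 + x * (1 - x) / real n"
    using assms by (simp add: field_simps power2_eq_square)
  finally show ?thesis .
qed

lemma double_dev_Bernstein:
  assumes "1 \<le> n" "1 \<le> m"
  shows "(\<Sum>k\<le>n. \<Sum>j\<le>m. (real k / real n - real j / real m)^2 * (Bernstein n k x * Bernstein m j x))
         = (1 / real n + 1 / real m) * (x * (1 - x))"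
proof -
  let ?B = "Bernstein"
  have e1: "(real k / real n - real j / real m)^2 * (?B n k x * ?B m j x)
     = ((real k / real n)^2 * ?B n k x) * ?B m j x
       - 2 * (((real k / real n) * ?B n k x) * ((real j / real m) * ?B m j x))
       + ?B n k x * ((real j / real m)^2 * ?B m j x)" for k j
    by (simp add: power2_eq_square algebra_simps)
  have "(\<Sum>k\<le>n. \<Sum>j\<le>m. (real k / real n - real j / real m)^2 * (?B n k x * ?B m j x))
      = (\<Sum>k\<le>n. \<Sum>j\<le>m. ((real k / real n)^2 * ?B n k x) * ?B m j x
       - 2 * (((real k / real n) * ?B n k x) * ((real j / real m) * ?B m j x))
       + ?B n k x * ((real j / real m)^2 * ?B m j x))"
    by (simp only: e1)
  also have "\<dots> = (\<Sum>k\<le>n. \<Sum>j\<le>m. ((real k / real n)^2 * ?B n k x) * ?B m j x)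
        - 2 * (\<Sum>k\<le>n. \<Sum>j\<le>m. ((real k / real n) * ?B n k x) * ((real j / real m) * ?B m j x))
        + (\<Sum>k\<le>n. \<Sum>j\<le>m. ?B n k x * ((real j / real m)^2 * ?B m j x))"
    by (simp only: sum.distrib sum_subtractf sum_distrib_left[symmetric])
  also have "\<dots> = (\<Sum>k\<le>n. (real k / real n)^2 * ?B n k x) * (\<Sum>j\<le>m. ?B m j x)
        - 2 * ((\<Sum>k\<le>n. (real k / real n) * ?B n k x) * (\<Sum>j\<le>m. (real j / real m) * ?B m j x))
        + (\<Sum>k\<le>n. ?B n k x) * (\<Sum>j\<le>m. (real j / real m)^2 * ?B m j x)"
    by (simp only: sum_product)
  also have "\<dots> = (x^2 + x * (1 - x) / real n) * 1 - 2 * (x * x) + 1 * (x^2 + x * (1 - x) / real m)"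
    by (simp only: sum_sq_Bernstein[OF assms(1)] sum_sq_Bernstein[OF assms(2)] sum_lin_Bernstein[OF assms(1)]
        sum_lin_Bernstein[OF assms(2)] sum_Bernstein)
  also have "\<dots> = (1 / real n + 1 / real m) * (x * (1 - x))"
    by (simp add: field_simps power2_eq_square)
  finally show ?thesis .
qed

lemma unif_cont_bound:
  fixes f :: "real \<Rightarrow> real"
  assumes cont: "continuous_on {a..b} f" and e: "0 < e"
  shows "\<exists>K\<ge>0. \<forall>x\<in>{a..b}. \<forall>y\<in>{a..b}. \<bar>f x - f y\<bar> \<le> e + K * (x - y)^2"
proof -
  have "uniformly_continuous_on {a..b} f"
    by (rule compact_uniformly_continuous[OF cont]) simp
  then obtain d where d: "0 < d" and dd: "\<And>x y. x \<in> {a..b} \<Longrightarrow> y \<in> {a..b} \<Longrightarrow> dist y x < d \<Longrightarrow> dist (f y) (f x) < e"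
    using e unfolding uniformly_continuous_on_def by metis
  have "bounded (f ` {a..b})"
    by (rule compact_imp_bounded, rule compact_continuous_image[OF cont]) simp
  then obtain M where M0: "\<forall>x\<in>{a..b}. \<bar>f x\<bar> \<le> M"
    unfolding bounded_iff by auto
  then have M: "\<And>x. x \<in> {a..b} \<Longrightarrow> \<bar>f x\<bar> \<le> M" by blast
  show ?thesis
  proof (cases "a \<le> b")
    case False then show ?thesis by auto
  next
    case True
    then have M0: "0 \<le> M" using M[of a] by auto
    define K where "K = 2 * M / d^2"
    have K0: "0 \<le> K" using M0 d by (simp add: K_def)
    have "\<bar>f x - f y\<bar> \<le> e + K * (x - y)^2" if x: "x \<in> {a..b}" and y: "y \<in> {a..b}" for x y
    proof (cases "\<bar>x - y\<bar> < d")
      case True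
      then have "\<bar>f x - f y\<bar> < e" using dd[OF y x] by (simp add: dist_real_def abs_minus_commute)
      moreover have "0 \<le> K * (x - y)^2" using K0 by simp
      ultimately show ?thesis by linarith
    next
      case False
      then have "d^2 \<le> (x - y)^2" using d by (metis abs_le_square_iff not_less order_less_imp_le abs_of_pos)
      then have "K * d^2 \<le> K * (x - y)^2" using K0 by (rule mult_left_mono)
      moreover have "K * d^2 = 2 * M" using d by (simp add: K_def)
      moreover have "\<bar>f x - f y\<bar> \<le> 2 * M" using M[OF x] M[OF y] by linarith
      ultimately show ?thesis using e by linarith
    qed
    then show ?thesis using K0 by blast
  qed
qed

section \<open>Bernstein polynomials in the polynomial ring\<close>

definition node :: "real \<Rightarrow> real \<Rightarrow> nat \<Rightarrow> nat \<Rightarrow> real" where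
  "node a b n k = a + real k * (b - a) / real n"

definition bern :: "(real \<Rightarrow> real) \<Rightarrow> real \<Rightarrow> real \<Rightarrow> nat \<Rightarrow> real poly" where
  "bern f a b n = (\<Sum>k\<le>n. smult (f (node a b n k) * real (n choose k)) (uP a b ^ k * vP a b ^ (n - k)))"

definition wP :: "real \<Rightarrow> real \<Rightarrow> nat \<Rightarrow> nat \<Rightarrow> nat \<Rightarrow> nat \<Rightarrow> real poly" where
  "wP a b n m k j = smult (real (n choose k) * real (m choose j)) (uP a b ^ (k + j) * vP a b ^ ((n - k) + (m - j)))"

lemma node_in: "a \<le> b \<Longrightarrow> k \<le> n \<Longrightarrow> node a b n k \<in> {a..b}"
proof (cases "n = 0")
  case True then show "a \<le> b \<Longrightarrow> k \<le> n \<Longrightarrow> node a b n k \<in> {a..b}" by (simp add: node_def)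
next
  assume ab: "a \<le> b" and kn: "k \<le> n" and False: "n \<noteq> 0"
  have "0 \<le> real k * (b - a) / real n" using ab by simp
  moreover have "real k * (b - a) / real n \<le> b - a"
  proof -
    have "real k * (b - a) \<le> real n * (b - a)" using ab kn by (intro mult_right_mono) auto
    then show ?thesis using False by (simp add: field_simps)
  qed
  ultimately show ?thesis by (simp add: node_def)
qed

lemma node_diff: "node a b n k - node a b m j = (b - a) * (real k / real n - real j / real m)"
  by (simp add: node_def algebra_simps)

lemma ev_bern: "ev A (bern f a b n) = bernstein_op f a b n A"
  by (simp add: bern_def bernstein_op_def ev_sum ev_smult ev_mult ev_power ev_uP ev_vP node_def)

context
  fixes a b :: real
  assumes ab: "a < b"
begin

lemma poly_uv: "poly (vP a b) x = 1 - poly (uP a b) x"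
  using ab by (simp add: poly_uP poly_vP field_simps)

lemma poly_bern: "poly (bern f a b n) x = (\<Sum>k\<le>n. f (node a b n k) * Bernstein n k (poly (uP a b) x))"
  by (simp add: bern_def poly_sum Bernstein_def poly_uv mult_ac)

lemma poly_wP: "poly (wP a b n m k j) x = Bernstein n k (poly (uP a b) x) * Bernstein m j (poly (uP a b) x)"
  by (simp add: wP_def Bernstein_def poly_uv power_add mult_ac)

lemma poly_double: "poly (\<Sum>k\<le>n. \<Sum>j\<le>m. smult (c k j) (wP a b n m k j)) x
   = (\<Sum>k\<le>n. \<Sum>j\<le>m. c k j * (Bernstein n k (poly (uP a b) x) * Bernstein m j (poly (uP a b) x)))"
  by (simp only: poly_sum poly_smult poly_wP)

lemma bern_as_double: "bern f a b n = (\<Sum>k\<le>n. \<Sum>j\<le>m. smult (f (node a b n k)) (wP a b n m k j))"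
proof -
  let ?s = "\<lambda>x. poly (uP a b) x"
  have "poly (bern f a b n) = poly (\<Sum>k\<le>n. \<Sum>j\<le>m. smult (f (node a b n k)) (wP a b n m k j))"
  proof
    fix x
    have "(\<Sum>k\<le>n. \<Sum>j\<le>m. f (node a b n k) * (Bernstein n k (?s x) * Bernstein m j (?s x)))
        = (\<Sum>k\<le>n. f (node a b n k) * Bernstein n k (?s x) * (\<Sum>j\<le>m. Bernstein m j (?s x)))"
      by (simp only: sum_distrib_left mult.assoc)
    then show "poly (bern f a b n) x = poly (\<Sum>k\<le>n. \<Sum>j\<le>m. smult (f (node a b n k)) (wP a b n m k j)) x"
      by (simp only: poly_double poly_bern sum_Bernstein mult_1_right)
  qed
  then show ?thesis by (simp only: poly_eq_poly_eq_iff)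
qed

lemma bern_as_double2: "bern f a b m = (\<Sum>k\<le>n. \<Sum>j\<le>m. smult (f (node a b m j)) (wP a b n m k j))"
proof -
  let ?s = "\<lambda>x. poly (uP a b) x"
  have "poly (bern f a b m) = poly (\<Sum>k\<le>n. \<Sum>j\<le>m. smult (f (node a b m j)) (wP a b n m k j))"
  proof
    fix x
    have "(\<Sum>k\<le>n. \<Sum>j\<le>m. f (node a b m j) * (Bernstein n k (?s x) * Bernstein m j (?s x)))
        = (\<Sum>k\<le>n. Bernstein n k (?s x)) * (\<Sum>j\<le>m. f (node a b m j) * Bernstein m j (?s x))"
      by (simp only: sum_product) (simp only: mult_ac)
    then show "poly (bern f a b m) x = poly (\<Sum>k\<le>n. \<Sum>j\<le>m. smult (f (node a b m j)) (wP a b n m k j)) x"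
      by (simp only: poly_double poly_bern sum_Bernstein mult_1_left)
  qed
  then show ?thesis by (simp only: poly_eq_poly_eq_iff)
qed

lemma bern_prod: "bern f a b n * bern g a b m = (\<Sum>k\<le>n. \<Sum>j\<le>m. smult (f (node a b n k) * g (node a b m j)) (wP a b n m k j))"
proof -
  let ?s = "\<lambda>x. poly (uP a b) x"
  have "poly (bern f a b n * bern g a b m) = poly (\<Sum>k\<le>n. \<Sum>j\<le>m. smult (f (node a b n k) * g (node a b m j)) (wP a b n m k j))"
  proof
    fix x
    have "(\<Sum>k\<le>n. \<Sum>j\<le>m. (f (node a b n k) * g (node a b m j)) * (Bernstein n k (?s x) * Bernstein m j (?s x)))
        = (\<Sum>k\<le>n. f (node a b n k) * Bernstein n k (?s x)) * (\<Sum>j\<le>m. g (node a b m j) * Bernstein m j (?s x))"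
      by (simp only: sum_product) (simp only: mult_ac)
    then show "poly (bern f a b n * bern g a b m) x = poly (\<Sum>k\<le>n. \<Sum>j\<le>m. smult (f (node a b n k) * g (node a b m j)) (wP a b n m k j)) x"
      by (simp only: poly_double poly_bern poly_mult)
  qed
  then show ?thesis by (simp only: poly_eq_poly_eq_iff)
qed

lemma one_as_double: "1 = (\<Sum>k\<le>n. \<Sum>j\<le>m. wP a b n m k j)"
proof -
  have "(\<Sum>k\<le>n. \<Sum>j\<le>m. wP a b n m k j) = (\<Sum>k\<le>n. \<Sum>j\<le>m. smult 1 (wP a b n m k j))" by simp
  also have "\<dots> = bern (\<lambda>_. 1) a b n" by (rule bern_as_double[symmetric])
  also have "\<dots> = 1"
  proof -
    have "poly (bern (\<lambda>_. 1) a b n) = poly 1"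
      by (rule ext) (simp only: poly_bern sum_Bernstein mult_1_left poly_1)
    then show ?thesis by (simp only: poly_eq_poly_eq_iff)
  qed
  finally show ?thesis ..
qed

lemma dev_as_double:
  assumes "1 \<le> n" "1 \<le> m"
  shows "smult (1 / real n + 1 / real m) (uP a b * vP a b)
       = (\<Sum>k\<le>n. \<Sum>j\<le>m. smult ((real k / real n - real j / real m)^2) (wP a b n m k j))"
proof -
  have "poly (smult (1 / real n + 1 / real m) (uP a b * vP a b))
      = poly (\<Sum>k\<le>n. \<Sum>j\<le>m. smult ((real k / real n - real j / real m)^2) (wP a b n m k j))"
  proof
    fix x
    show "poly (smult (1 / real n + 1 / real m) (uP a b * vP a b)) x
      = poly (\<Sum>k\<le>n. \<Sum>j\<le>m. smult ((real k / real n - real j / real m)^2) (wP a b n m k j)) x"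
      by (simp only: poly_double double_dev_Bernstein[OF assms] poly_smult poly_mult poly_uv)
  qed
  then show ?thesis by (simp only: poly_eq_poly_eq_iff)
qed

lemma bern_id: assumes "1 \<le> n" shows "bern (\<lambda>x. x) a b n = [:0, 1:]"
proof -
  have "poly (bern (\<lambda>x. x) a b n) x = poly [:0, 1:] x" for x
  proof -
    let ?s = "poly (uP a b) x"
    have "poly (bern (\<lambda>x. x) a b n) x = (\<Sum>k\<le>n. (a + (b - a) * (real k / real n)) * Bernstein n k ?s)"
      by (simp add: poly_bern node_def algebra_simps)
    also have "\<dots> = a * (\<Sum>k\<le>n. Bernstein n k ?s) + (b - a) * (\<Sum>k\<le>n. (real k / real n) * Bernstein n k ?s)"
      by (simp only: distrib_right sum.distrib sum_distrib_left mult.assoc)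
    also have "\<dots> = a + (b - a) * ?s" by (simp only: sum_Bernstein sum_lin_Bernstein[OF assms] mult_1_right)
    also have "\<dots> = x" using ab by (simp add: poly_uP)
    finally show ?thesis by simp
  qed
  then show ?thesis by (metis poly_eq_poly_eq_iff ext)
qed

lemma bern_const: "bern (\<lambda>x. c) a b n = [:c:]"
proof -
  have "poly (bern (\<lambda>x. c) a b n) x = poly [:c:] x" for x
    by (simp only: poly_bern sum_distrib_left[symmetric] sum_Bernstein mult_1_right poly_pCons poly_0 mult_zero_right add_0_right)
  then show ?thesis by (metis poly_eq_poly_eq_iff ext)
qed

end

lemma bern_add: "bern (\<lambda>x. f x + g x) a b n = bern f a b n + bern g a b n"
  by (simp add: bern_def sum.distrib smult_add_left distrib_right)

lemma smult_sum_right: "smult c (\<Sum>i\<in>I. f i) = (\<Sum>i\<in>I. smult c (f i))"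
  by (induction I rule: infinite_finite_induct) (auto simp: smult_add_right)

lemma bern_scale: "bern (\<lambda>x. c * f x) a b n = smult c (bern f a b n)"
  by (simp add: bern_def smult_sum_right smult_smult mult.assoc)

lemma bern_cong:
  assumes "a \<le> b" "\<And>x. x \<in> {a..b} \<Longrightarrow> f x = g x"
  shows "bern f a b n = bern g a b n"
  unfolding bern_def
proof (intro sum.cong refl)
  fix k assume "k \<in> {..n}"
  then have "node a b n k \<in> {a..b}" using node_in assms(1) by auto
  then show "smult (f (node a b n k) * real (n choose k)) (uP a b ^ k * vP a b ^ (n - k))
           = smult (g (node a b n k) * real (n choose k)) (uP a b ^ k * vP a b ^ (n - k))"
    using assms(2) by simp
qed


section \<open>Limits of operators\<close>

lemma blinfun_Cauchy_convergent:
  fixes X::"nat \<Rightarrow> 'a::real_normed_vector \<Rightarrow>\<^sub>L 'b::{real_normed_vector,complete_space}"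
  assumes "Cauchy X"
  shows "convergent X"
proof -
  {
    fix x::'a
    {
      fix x::'a
      assume "norm x \<le> 1"
      have "Cauchy (\<lambda>n. X n x)"
      proof (rule CauchyI)
        fix e::real
        assume "0 < e"
        from CauchyD[OF \<open>Cauchy X\<close> \<open>0 < e\<close>] obtain M
          where M: "\<And>m n. m \<ge> M \<Longrightarrow> n \<ge> M \<Longrightarrow> norm (X m - X n) < e"
          by auto
        show "\<exists>M. \<forall>m\<ge>M. \<forall>n\<ge>M. norm (X m x - X n x) < e"
        proof (safe intro!: exI[where x=M])
          fix m n
          assume le: "M \<le> m" "M \<le> n"
          have "norm (X m x - X n x) = norm ((X m - X n) x)"
            by (simp add: blinfun.bilinear_simps)
          also have "\<dots> \<le> norm (X m - X n) * norm x"
             by (rule norm_blinfun)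
          also have "\<dots> \<le> norm (X m - X n) * 1"
            using \<open>norm x \<le> 1\<close> norm_ge_zero by (rule mult_left_mono)
          also have "\<dots> = norm (X m - X n)" by simp
          also have "\<dots> < e" using le by fact
          finally show "norm (X m x - X n x) < e" .
        qed
      qed
      hence "convergent (\<lambda>n. X n x)"
        by (metis Cauchy_convergent_iff)
    } note convergent_norm1 = this
    define y where "y = x /\<^sub>R norm x"
    have y: "norm y \<le> 1" and xy: "x = norm x *\<^sub>R y"
      by (simp_all add: y_def inverse_eq_divide)
    have "convergent (\<lambda>n. norm x *\<^sub>R X n y)"
      by (intro bounded_bilinear.convergent[OF bounded_bilinear_scaleR] convergent_const
        convergent_norm1 y)
    also have "(\<lambda>n. norm x *\<^sub>R X n y) = (\<lambda>n. X n x)"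
      by (subst xy) (simp add: blinfun.bilinear_simps)
    finally have "convergent (\<lambda>n. X n x)" .
  }
  then obtain v where v: "\<And>x. (\<lambda>n. X n x) \<longlonglongrightarrow> v x"
    unfolding convergent_def
    by metis

  have "Cauchy (\<lambda>n. norm (X n))"
  proof (rule CauchyI)
    fix e::real
    assume "e > 0"
    from CauchyD[OF \<open>Cauchy X\<close> \<open>0 < e\<close>] obtain M
      where M: "\<And>m n. m \<ge> M \<Longrightarrow> n \<ge> M \<Longrightarrow> norm (X m - X n) < e"
      by auto
    show "\<exists>M. \<forall>m\<ge>M. \<forall>n\<ge>M. norm (norm (X m) - norm (X n)) < e"
    proof (safe intro!: exI[where x=M])
      fix m n assume mn: "m \<ge> M" "n \<ge> M"
      have "norm (norm (X m) - norm (X n)) \<le> norm (X m - X n)"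
        by (metis norm_triangle_ineq3 real_norm_def)
      also have "\<dots> < e" using mn by fact
      finally show "norm (norm (X m) - norm (X n)) < e" .
    qed
  qed
  then obtain K where K: "(\<lambda>n. norm (X n)) \<longlonglongrightarrow> K"
    unfolding Cauchy_convergent_iff convergent_def
    by metis

  have "bounded_linear v"
  proof
    fix x y and r::real
    from tendsto_add[OF v[of x] v [of y]] v[of "x + y", unfolded blinfun.bilinear_simps]
      tendsto_scaleR[OF tendsto_const[of r] v[of x]] v[of "r *\<^sub>R x", unfolded blinfun.bilinear_simps]
    show "v (x + y) = v x + v y" "v (r *\<^sub>R x) = r *\<^sub>R v x"
      by (metis (poly_guards_query) LIMSEQ_unique)+
    show "\<exists>K. \<forall>x. norm (v x) \<le> norm x * K"
    proof (safe intro!: exI[where x=K])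
      fix x
      have "norm (v x) \<le> K * norm x"
        by (rule tendsto_le[OF _ tendsto_mult[OF K tendsto_const] tendsto_norm[OF v]])
          (auto simp: norm_blinfun)
      thus "norm (v x) \<le> norm x * K"
        by (simp add: ac_simps)
    qed
  qed
  hence Bv: "\<And>x. (\<lambda>n. X n x) \<longlonglongrightarrow> Blinfun v x"
    by (auto simp: bounded_linear_Blinfun_apply v)

  have "X \<longlonglongrightarrow> Blinfun v"
  proof (rule LIMSEQ_I)
    fix r::real assume "r > 0"
    define r' where "r' = r / 2"
    have "0 < r'" "r' < r" using \<open>r > 0\<close> by (simp_all add: r'_def)
    from CauchyD[OF \<open>Cauchy X\<close> \<open>r' > 0\<close>]
    obtain M where M: "\<And>m n. m \<ge> M \<Longrightarrow> n \<ge> M \<Longrightarrow> norm (X m - X n) < r'"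
      by metis
    show "\<exists>no. \<forall>n\<ge>no. norm (X n - Blinfun v) < r"
    proof (safe intro!: exI[where x=M])
      fix n assume n: "M \<le> n"
      have "norm (X n - Blinfun v) \<le> r'"
      proof (rule norm_blinfun_bound)
        fix x
        have "eventually (\<lambda>m. m \<ge> M) sequentially"
          by (metis eventually_ge_at_top)
        hence ev_le: "eventually (\<lambda>m. norm (X n x - X m x) \<le> r' * norm x) sequentially"
        proof eventually_elim
          case (elim m)
          have "norm (X n x - X m x) = norm ((X n - X m) x)"
            by (simp add: blinfun.bilinear_simps)
          also have "\<dots> \<le> norm ((X n - X m)) * norm x"
            by (rule norm_blinfun)
          also have "\<dots> \<le> r' * norm x"
            using M[OF n elim] by (simp add: mult_right_mono)
          finally show ?case .
        qed
        have tendsto_v: "(\<lambda>m. norm (X n x - X m x)) \<longlonglongrightarrow> norm (X n x - Blinfun v x)"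
          by (auto intro!: tendsto_intros Bv)
        show "norm ((X n - Blinfun v) x) \<le> r' * norm x"
          by (auto intro!: tendsto_upperbound tendsto_v ev_le simp: blinfun.bilinear_simps)
      qed (simp add: \<open>0 < r'\<close> less_imp_le)
      thus "norm (X n - Blinfun v) < r"
        by (metis \<open>r' < r\<close> le_less_trans)
    qed
  qed
  thus "convergent X"
    by (rule convergentI)
qed

lemma tendsto_apply_inner:
  fixes B :: "nat \<Rightarrow> 'a::real_inner op"
  assumes "B \<longlonglongrightarrow> L"
  shows "(\<lambda>n. inner (B n x) y) \<longlonglongrightarrow> inner (L x) y"
proof -
  have "(\<lambda>n. B n x) \<longlonglongrightarrow> L x" using blinfun.tendsto[OF assms tendsto_const[of x]] by simp
  then show ?thesis by (rule tendsto_inner[OF _ tendsto_const])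
qed

lemma selfadjoint_lim:
  fixes B :: "nat \<Rightarrow> 'a::real_inner op"
  assumes "B \<longlonglongrightarrow> L" "\<And>n. selfadjoint (B n)"
  shows "selfadjoint L"
  unfolding selfadjoint_def
proof (intro allI)
  fix x y
  have "(\<lambda>n. inner (B n x) y) \<longlonglongrightarrow> inner (L x) y" by (rule tendsto_apply_inner[OF assms(1)])
  moreover have "(\<lambda>n. inner (B n x) y) = (\<lambda>n. inner (B n y) x)"
    using assms(2) by (simp add: selfadjoint_inner_sym)
  moreover have "(\<lambda>n. inner (B n y) x) \<longlonglongrightarrow> inner (L y) x" by (rule tendsto_apply_inner[OF assms(1)])
  ultimately have "inner (L x) y = inner (L y) x" by (metis LIMSEQ_unique)
  then show "inner (L x) y = inner x (L y)" by (simp add: inner_commute)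
qed

lemma positive_lim:
  fixes B :: "nat \<Rightarrow> 'a::real_inner op"
  assumes "B \<longlonglongrightarrow> L" "\<And>n. positive_op (B n)"
  shows "positive_op L"
proof -
  have "selfadjoint L" using assms by (intro selfadjoint_lim[OF assms(1)]) (auto simp: positive_op_def)
  moreover have "0 \<le> inner (L x) x" for x
    using tendsto_apply_inner[OF assms(1), of x x] assms(2)
    by (intro LIMSEQ_le_const[of "\<lambda>n. inner (B n x) x"]) (auto simp: positive_op_def)
  ultimately show ?thesis by (simp add: positive_op_def)
qed

section \<open>Operator Bernstein estimates\<close>

context
  fixes A :: "'a::{real_inner,complete_space} op" and a b :: real
  assumes sb: "sbound A a b" and ab: "a < b"
begin

lemma wP_pos: "positive_op (ev A (wP a b n m k j))"
  unfolding wP_def ev_smult by (intro positive_scaleR cone_pos[OF sb ab]) simp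

lemma double_pos:
  assumes "\<And>k j. k \<le> n \<Longrightarrow> j \<le> m \<Longrightarrow> 0 \<le> c k j"
  shows "positive_op (ev A (\<Sum>k\<le>n. \<Sum>j\<le>m. smult (c k j) (wP a b n m k j)))"
  unfolding ev_sum ev_smult using assms by (intro positive_sum positive_scaleR wP_pos) auto

lemma uv_le: "inner (ev A (uP a b * vP a b) x) x \<le> (norm x)^2"
proof -
  let ?U = "ev A (uP a b)"
  have V: "ev A (vP a b) = id_blinfun - ?U" using U_plus_V[OF sb ab] by (simp add: algebra_simps)
  have saU: "selfadjoint ?U" by (rule ev_selfadjoint[OF sb_sa[OF sb ab]])
  have "inner (ev A (uP a b * vP a b) x) x = inner (?U x) x - inner (?U (?U x)) x"
    by (simp add: ev_mult V blinfun.bilinear_simps inner_diff_left)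
  also have "inner (?U (?U x)) x = (norm (?U x))^2"
    using saU by (simp add: selfadjoint_def power2_norm_eq_inner)
  finally have "inner (ev A (uP a b * vP a b) x) x \<le> inner (?U x) x" by simp
  also have "inner (?U x) x \<le> (norm x)^2"
  proof -
    have "inner (?U x) x + inner (ev A (vP a b) x) x = (norm x)^2"
      by (simp add: V blinfun.bilinear_simps inner_diff_left power2_norm_eq_inner)
    moreover have "0 \<le> inner (ev A (vP a b) x) x" using V_pos[OF sb ab] by (simp add: positive_op_def)
    ultimately show ?thesis by simp
  qed
  finally show ?thesis .
qed

lemma double_norm_bound:
  assumes n: "1 \<le> n" and m: "1 \<le> m" and e: "0 \<le> e" and K: "0 \<le> K"
    and d: "\<And>k j. k \<le> n \<Longrightarrow> j \<le> m \<Longrightarrow> \<bar>d k j\<bar> \<le> e + K * (real k / real n - real j / real m)^2"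
  shows "norm (ev A (\<Sum>k\<le>n. \<Sum>j\<le>m. smult (d k j) (wP a b n m k j))) \<le> e + K * (1 / real n + 1 / real m)"
proof -
  define D where "D = (\<Sum>k\<le>n. \<Sum>j\<le>m. smult (d k j) (wP a b n m k j))"
  define c where "c = (\<lambda>k j. e + K * (real k / real n - real j / real m)^2)"
  define R where "R = smult e 1 + smult K (smult (1 / real n + 1 / real m) (uP a b * vP a b))"
  have R: "R = (\<Sum>k\<le>n. \<Sum>j\<le>m. smult (c k j) (wP a b n m k j))"
    unfolding R_def dev_as_double[OF ab n m] one_as_double[OF ab, of n m] c_def
    by (simp add: smult_sum_right smult_add_left sum.distrib smult_smult)
  have eq1: "R - D = (\<Sum>k\<le>n. \<Sum>j\<le>m. smult (c k j - d k j) (wP a b n m k j))"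
    unfolding R D_def by (simp add: sum_subtractf smult_diff_left)
  have "positive_op (ev A (\<Sum>k\<le>n. \<Sum>j\<le>m. smult (c k j - d k j) (wP a b n m k j)))"
  proof (rule double_pos)
    fix k j assume "k \<le> n" "j \<le> m"
    then show "0 \<le> c k j - d k j" using d[of k j] by (simp add: c_def abs_le_iff)
  qed
  then have p1: "positive_op (ev A (R - D))" unfolding eq1 .
  have eq2: "R + D = (\<Sum>k\<le>n. \<Sum>j\<le>m. smult (c k j + d k j) (wP a b n m k j))"
    unfolding R D_def by (simp add: sum.distrib smult_add_left)
  have "positive_op (ev A (\<Sum>k\<le>n. \<Sum>j\<le>m. smult (c k j + d k j) (wP a b n m k j)))"
  proof (rule double_pos)
    fix k j assume "k \<le> n" "j \<le> m"
    then show "0 \<le> c k j + d k j" using d[of k j] by (simp add: c_def abs_le_iff)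
  qed
  then have p2: "positive_op (ev A (R + D))" unfolding eq2 .
  have Rx: "inner (ev A R x) x \<le> (e + K * (1 / real n + 1 / real m)) * (norm x)^2" for x
  proof -
    have "inner (ev A R x) x = e * (norm x)^2 + (K * (1 / real n + 1 / real m)) * inner (ev A (uP a b * vP a b) x) x"
      by (simp add: R_def ev_add ev_smult ev_const blinfun.bilinear_simps inner_add_left power2_norm_eq_inner)
    also have "\<dots> \<le> e * (norm x)^2 + (K * (1 / real n + 1 / real m)) * (norm x)^2"
      using K by (intro add_left_mono mult_left_mono uv_le) auto
    finally show ?thesis by (simp add: algebra_simps)
  qed
  have "norm (ev A D) \<le> e + K * (1 / real n + 1 / real m)"
  proof (rule selfadjoint_norm_bound[OF ev_selfadjoint[OF sb_sa[OF sb ab]]])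
    show "0 \<le> e + K * (1 / real n + 1 / real m)" using e K by simp
    fix x
    have "0 \<le> inner (ev A (R - D) x) x" "0 \<le> inner (ev A (R + D) x) x"
      using p1 p2 by (auto simp: positive_op_def)
    then have "\<bar>inner (ev A D x) x\<bar> \<le> inner (ev A R x) x"
      by (simp add: ev_add ev_diff blinfun.bilinear_simps inner_add_left inner_diff_left abs_le_iff)
    with Rx[of x] show "\<bar>inner (ev A D x) x\<bar> \<le> (e + K * (1 / real n + 1 / real m)) * (norm x)^2" by linarith
  qed
  then show ?thesis by (simp add: D_def)
qed

lemma bern_diff_bound:
  assumes n: "1 \<le> n" and m: "1 \<le> m" and e: "0 \<le> e" and K: "0 \<le> K"
    and f: "\<forall>x\<in>{a..b}. \<forall>y\<in>{a..b}. \<bar>f x - f y\<bar> \<le> e + K * (x - y)^2"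
  shows "norm (ev A (bern f a b n) - ev A (bern f a b m)) \<le> e + (K * (b - a)^2) * (1 / real n + 1 / real m)"
proof -
  have eq: "bern f a b n - bern f a b m
      = (\<Sum>k\<le>n. \<Sum>j\<le>m. smult (f (node a b n k) - f (node a b m j)) (wP a b n m k j))"
    by (simp only: bern_as_double[OF ab, of f n m] bern_as_double2[OF ab, of f m n] sum_subtractf[symmetric]
        smult_diff_left)
  have "norm (ev A (bern f a b n - bern f a b m)) \<le> e + (K * (b - a)^2) * (1 / real n + 1 / real m)"
    unfolding eq
  proof (rule double_norm_bound[OF n m e])
    show "0 \<le> K * (b - a)^2" using K by simp
    fix k j assume "k \<le> n" "j \<le> m"
    then have "node a b n k \<in> {a..b}" "node a b m j \<in> {a..b}" using node_in ab by auto
    then have "\<bar>f (node a b n k) - f (node a b m j)\<bar> \<le> e + K * (node a b n k - node a b m j)^2"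
      using f by blast
    then show "\<bar>f (node a b n k) - f (node a b m j)\<bar> \<le> e + K * (b - a)^2 * (real k / real n - real j / real m)^2"
      by (simp add: node_diff power_mult_distrib mult.assoc)
  qed
  then show ?thesis by (simp add: ev_diff)
qed

lemma bern_cauchy:
  assumes cont: "continuous_on {a..b} f"
  shows "Cauchy (\<lambda>n. ev A (bern f a b n))"
proof (rule CauchyI)
  fix e :: real assume e: "0 < e"
  obtain K where K: "0 \<le> K" and Kf: "\<forall>x\<in>{a..b}. \<forall>y\<in>{a..b}. \<bar>f x - f y\<bar> \<le> e / 2 + K * (x - y)^2"
    using unif_cont_bound[OF cont, of "e/2"] e by auto
  define K' where "K' = K * (b - a)^2"
  have K': "0 \<le> K'" using K by (simp add: K'_def)
  define N where "N = nat (ceiling (8 * K' / e)) + 1"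
  have N1: "1 \<le> N" by (simp add: N_def)
  have NK: "8 * K' / e < real N" unfolding N_def by linarith
  have "\<forall>m\<ge>N. \<forall>n\<ge>N. norm (ev A (bern f a b m) - ev A (bern f a b n)) < e"
  proof (intro allI impI)
    fix m n assume mN: "N \<le> m" and nN: "N \<le> n"
    have m1: "1 \<le> m" and n1: "1 \<le> n" using mN nN N1 by auto
    have "norm (ev A (bern f a b m) - ev A (bern f a b n)) \<le> e / 2 + K' * (1 / real m + 1 / real n)"
      using bern_diff_bound[OF m1 n1 _ K Kf] e by (simp add: K'_def)
    also have "K' * (1 / real m + 1 / real n) \<le> K' * (2 / real N)"
    proof -
      have "1 / real m \<le> 1 / real N" "1 / real n \<le> 1 / real N" using mN nN N1 by (auto simp: frac_le)
      then show ?thesis using K' by (intro mult_left_mono) auto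
    qed
    also have "K' * (2 / real N) < e / 2"
    proof -
      have "8 * K' < e * real N" using NK e by (simp add: field_simps)
      then have "4 * K' < e * real N" using K' by linarith
      then show ?thesis using N1 by (simp add: field_simps)
    qed
    finally show "norm (ev A (bern f a b m) - ev A (bern f a b n)) < e" by simp
  qed
  then show "\<exists>M. \<forall>m\<ge>M. \<forall>n\<ge>M. norm (ev A (bern f a b m) - ev A (bern f a b n)) < e" by blast
qed

definition fc :: "(real \<Rightarrow> real) \<Rightarrow> 'a op" where
  "fc f = lim (\<lambda>n. ev A (bern f a b n))"

lemma fc_tendsto:
  assumes "continuous_on {a..b} f"
  shows "(\<lambda>n. ev A (bern f a b n)) \<longlonglongrightarrow> fc f"
proof -
  have "convergent (\<lambda>n. ev A (bern f a b n))" using bern_cauchy[OF assms] by (rule blinfun_Cauchy_convergent)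
  then show ?thesis unfolding fc_def by (rule convergent_LIMSEQ_iff[THEN iffD1])
qed

lemma fc_approx:
  assumes cont: "continuous_on {a..b} f" and n: "1 \<le> n" and e: "0 \<le> e" and K: "0 \<le> K"
    and f: "\<forall>x\<in>{a..b}. \<forall>y\<in>{a..b}. \<bar>f x - f y\<bar> \<le> e + K * (x - y)^2"
  shows "norm (ev A (bern f a b n) - fc f) \<le> e + (K * (b - a)^2) / real n"
proof -
  have t1: "(\<lambda>m. norm (ev A (bern f a b n) - ev A (bern f a b m))) \<longlonglongrightarrow> norm (ev A (bern f a b n) - fc f)"
    by (intro tendsto_intros fc_tendsto[OF cont])
  have t2: "(\<lambda>m. e + (K * (b - a)^2) * (1 / real n + 1 / real m)) \<longlonglongrightarrow> e + (K * (b - a)^2) * (1 / real n + 0)"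
    by (intro tendsto_intros)
  have "norm (ev A (bern f a b n) - fc f) \<le> e + (K * (b - a)^2) * (1 / real n + 0)"
    by (rule LIMSEQ_le[OF t1 t2]) (use bern_diff_bound[OF n _ e K f] in auto)
  then show ?thesis by simp
qed

lemma fc_selfadjoint:
  assumes "continuous_on {a..b} f"
  shows "selfadjoint (fc f)"
  by (rule selfadjoint_lim[OF fc_tendsto[OF assms]]) (rule ev_selfadjoint[OF sb_sa[OF sb ab]])

lemma fc_pos:
  assumes "continuous_on {a..b} f" and pos: "\<And>x. x \<in> {a..b} \<Longrightarrow> 0 \<le> f x"
  shows "positive_op (fc f)"
proof (rule positive_lim[OF fc_tendsto[OF assms(1)]])
  fix n
  have "positive_op (ev A (\<Sum>k\<le>n. \<Sum>j\<le>n. smult (f (node a b n k)) (wP a b n n k j)))"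
    by (rule double_pos) (use pos node_in ab in auto)
  then show "positive_op (ev A (bern f a b n))" by (simp only: bern_as_double[OF ab, of f n n])
qed

lemma fc_cong:
  assumes "\<And>x. x \<in> {a..b} \<Longrightarrow> f x = g x"
  shows "fc f = fc g"
  unfolding fc_def using bern_cong[of a b f g] assms ab by simp

lemma fc_add:
  assumes "continuous_on {a..b} f" "continuous_on {a..b} g"
  shows "fc (\<lambda>x. f x + g x) = fc f + fc g"
proof -
  have "(\<lambda>n. ev A (bern (\<lambda>x. f x + g x) a b n)) \<longlonglongrightarrow> fc f + fc g"
    unfolding bern_add ev_add by (intro tendsto_add fc_tendsto assms)
  moreover have "(\<lambda>n. ev A (bern (\<lambda>x. f x + g x) a b n)) \<longlonglongrightarrow> fc (\<lambda>x. f x + g x)"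
    by (intro fc_tendsto continuous_on_add assms)
  ultimately show ?thesis by (metis LIMSEQ_unique)
qed

lemma fc_scale:
  assumes "continuous_on {a..b} f"
  shows "fc (\<lambda>x. c * f x) = c *\<^sub>R fc f"
proof -
  have "(\<lambda>n. ev A (bern (\<lambda>x. c * f x) a b n)) \<longlonglongrightarrow> c *\<^sub>R fc f"
    unfolding bern_scale ev_smult by (intro tendsto_scaleR tendsto_const fc_tendsto assms)
  moreover have "(\<lambda>n. ev A (bern (\<lambda>x. c * f x) a b n)) \<longlonglongrightarrow> fc (\<lambda>x. c * f x)"
    by (intro fc_tendsto continuous_on_mult continuous_on_const assms)
  ultimately show ?thesis by (metis LIMSEQ_unique)
qed

lemma fc_const: "fc (\<lambda>x. c) = c *\<^sub>R id_blinfun"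
  unfolding fc_def bern_const[OF ab] ev_const by simp

lemma fc_id: "fc (\<lambda>x. x) = A"
proof -
  have "(\<lambda>n. ev A (bern (\<lambda>x. x) a b n)) \<longlonglongrightarrow> A"
  proof (rule LIMSEQ_offset[where k=1])
    show "(\<lambda>n. ev A (bern (\<lambda>x. x) a b (n + 1))) \<longlonglongrightarrow> A"
      by (simp add: bern_id[OF ab] ev_X)
  qed
  moreover have "(\<lambda>n. ev A (bern (\<lambda>x. x) a b n)) \<longlonglongrightarrow> fc (\<lambda>x. x)"
    by (intro fc_tendsto continuous_on_id)
  ultimately show ?thesis by (metis LIMSEQ_unique)
qed

end


lemma cont_bounded:
  fixes f :: "real \<Rightarrow> real"
  assumes "continuous_on {a..b} f"
  shows "\<exists>M\<ge>0. \<forall>x\<in>{a..b}. \<bar>f x\<bar> \<le> M"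
proof -
  have "bounded (f ` {a..b})"
    by (rule compact_imp_bounded, rule compact_continuous_image[OF assms]) simp
  then obtain M where "\<forall>x\<in>{a..b}. \<bar>f x\<bar> \<le> M" unfolding bounded_iff by auto
  then show ?thesis by (intro exI[of _ "max M 0"]) auto
qed

lemma Zseq_lemma:
  fixes X :: "nat \<Rightarrow> 'b::real_normed_vector"
  assumes "\<And>e. 0 < e \<Longrightarrow> \<exists>K\<ge>0. \<forall>n\<ge>1. norm (X n) \<le> e + K / real n"
  shows "X \<longlonglongrightarrow> 0"
proof (rule LIMSEQ_I)
  fix r :: real assume r: "0 < r"
  obtain K where K: "0 \<le> K" and XK: "\<forall>n\<ge>1. norm (X n) \<le> r / 2 + K / real n"
    using assms[of "r/2"] r by auto
  define N where "N = nat (ceiling (4 * K / r)) + 1"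
  have "\<forall>n\<ge>N. norm (X n - 0) < r"
  proof (intro allI impI)
    fix n assume nN: "N \<le> n"
    have n1: "1 \<le> n" using nN by (simp add: N_def)
    have "4 * K / r < real N" unfolding N_def by linarith
    also have "\<dots> \<le> real n" using nN by simp
    finally have "4 * K < r * real n" using r by (simp add: field_simps)
    then have "K / real n < r / 2" using n1 K by (simp add: field_simps)
    moreover have "norm (X n) \<le> r / 2 + K / real n" using XK n1 by blast
    ultimately have "norm (X n) < r" by linarith
    then show "norm (X n - 0) < r" by simp
  qed
  then show "\<exists>no. \<forall>n\<ge>no. norm (X n - 0) < r" by blast
qed

context
  fixes A :: "'a::{real_inner,complete_space} op" and a b :: real
  assumes sb: "sbound A a b" and ab: "a < b"
begin

lemma fc_mult:
  assumes cf: "continuous_on {a..b} f" and cg: "continuous_on {a..b} g"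
  shows "fc A a b f o\<^sub>L fc A a b g = fc A a b (\<lambda>x. f x * g x)"
proof -
  obtain M where M0: "0 \<le> M" and M: "\<forall>x\<in>{a..b}. \<bar>f x\<bar> \<le> M" using cont_bounded[OF cf] by blast
  define D where "D = (\<lambda>n. ev A (bern f a b n * bern g a b n) - ev A (bern (\<lambda>x. f x * g x) a b n))"
  have "D \<longlonglongrightarrow> 0"
  proof (rule Zseq_lemma)
    fix e :: real assume e: "0 < e"
    define e' where "e' = e / (M + 1)"
    have e': "0 < e'" using e M0 by (simp add: e'_def)
    have Me: "M * e' \<le> e" using e M0 by (simp add: e'_def field_simps)
    obtain K where K: "0 \<le> K" and Kg: "\<forall>x\<in>{a..b}. \<forall>y\<in>{a..b}. \<bar>g x - g y\<bar> \<le> e' + K * (x - y)^2"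
      using unif_cont_bound[OF cg e'] by auto
    have "norm (D n) \<le> e + (2 * M * K * (b - a)^2) / real n" if n: "1 \<le> n" for n
    proof -
      have eq: "bern f a b n * bern g a b n - bern (\<lambda>x. f x * g x) a b n
        = (\<Sum>k\<le>n. \<Sum>j\<le>n. smult (f (node a b n k) * (g (node a b n j) - g (node a b n k))) (wP a b n n k j))"
        by (simp only: bern_prod[OF ab] bern_as_double[OF ab, of "\<lambda>x. f x * g x" n n]
            sum_subtractf[symmetric] smult_diff_left[symmetric] right_diff_distrib)
      have "norm (ev A (\<Sum>k\<le>n. \<Sum>j\<le>n. smult (f (node a b n k) * (g (node a b n j) - g (node a b n k))) (wP a b n n k j)))
          \<le> M * e' + (M * K * (b - a)^2) * (1 / real n + 1 / real n)"
      proof (rule double_norm_bound[OF sb ab n n])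
        show "0 \<le> M * e'" using M0 e' by simp
        show "0 \<le> M * K * (b - a)^2" using M0 K by simp
        fix k j assume kj: "k \<le> n" "j \<le> n"
        then have nk: "node a b n k \<in> {a..b}" and nj: "node a b n j \<in> {a..b}" using node_in ab by auto
        have "\<bar>f (node a b n k) * (g (node a b n j) - g (node a b n k))\<bar>
            = \<bar>f (node a b n k)\<bar> * \<bar>g (node a b n j) - g (node a b n k)\<bar>" by (simp add: abs_mult)
        also have "\<dots> \<le> M * (e' + K * (node a b n j - node a b n k)^2)"
          using M nk Kg nj by (intro mult_mono) auto
        also have "(node a b n j - node a b n k)^2 = (b - a)^2 * (real k / real n - real j / real n)^2"
          by (simp add: node_diff power_mult_distrib power2_commute)
        finally show "\<bar>f (node a b n k) * (g (node a b n j) - g (node a b n k))\<bar>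
            \<le> M * e' + M * K * (b - a)^2 * (real k / real n - real j / real n)^2"
          by (simp add: algebra_simps)
      qed
      then have "norm (D n) \<le> M * e' + (M * K * (b - a)^2) * (1 / real n + 1 / real n)"
        by (simp only: D_def ev_diff[symmetric] eq)
      also have "\<dots> = M * e' + (2 * M * K * (b - a)^2) / real n" by (simp add: field_simps)
      finally show ?thesis using Me by linarith
    qed
    moreover have "0 \<le> 2 * M * K * (b - a)^2" using M0 K by simp
    ultimately show "\<exists>K\<ge>0. \<forall>n\<ge>1. norm (D n) \<le> e + K / real n" by blast
  qed
  have t1: "(\<lambda>n. ev A (bern f a b n * bern g a b n)) \<longlonglongrightarrow> (fc A a b f o\<^sub>L fc A a b g)"
    unfolding ev_mult
    by (rule bounded_bilinear.tendsto[OF bounded_bilinear_blinfun_compose fc_tendsto[OF sb ab cf] fc_tendsto[OF sb ab cg]])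
  have "(\<lambda>n. ev A (bern f a b n * bern g a b n) - D n) \<longlonglongrightarrow> (fc A a b f o\<^sub>L fc A a b g) - 0"
    by (intro tendsto_diff t1 \<open>D \<longlonglongrightarrow> 0\<close>)
  then have "(\<lambda>n. ev A (bern (\<lambda>x. f x * g x) a b n)) \<longlonglongrightarrow> (fc A a b f o\<^sub>L fc A a b g)"
    by (simp add: D_def)
  moreover have "(\<lambda>n. ev A (bern (\<lambda>x. f x * g x) a b n)) \<longlonglongrightarrow> fc A a b (\<lambda>x. f x * g x)"
    by (intro fc_tendsto[OF sb ab] continuous_on_mult cf cg)
  ultimately show ?thesis by (metis LIMSEQ_unique)
qed

end

section \<open>Positive invertible operators\<close>

lemma inv_op_props:
  assumes "invertible_op A"
  shows "A o\<^sub>L inv_op A = id_blinfun" "inv_op A o\<^sub>L A = id_blinfun"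
proof -
  obtain B where B: "A o\<^sub>L B = id_blinfun" "B o\<^sub>L A = id_blinfun" using assms by (auto simp: invertible_op_def)
  have uniq: "C = B" if "A o\<^sub>L C = id_blinfun \<and> C o\<^sub>L A = id_blinfun" for C
  proof -
    have "C = (B o\<^sub>L A) o\<^sub>L C" using B by simp
    also have "\<dots> = B o\<^sub>L (A o\<^sub>L C)" by (simp add: oL_assoc)
    finally show ?thesis using that by simp
  qed
  have "inv_op A = B" unfolding inv_op_def
  proof (rule the_equality)
    show "A o\<^sub>L B = id_blinfun \<and> B o\<^sub>L A = id_blinfun" using B by simp
  next
    fix C assume "A o\<^sub>L C = id_blinfun \<and> C o\<^sub>L A = id_blinfun"
    then show "C = B" by (rule uniq)
  qed
  then show "A o\<^sub>L inv_op A = id_blinfun" "inv_op A o\<^sub>L A = id_blinfun" using B by auto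
qed

lemma inv_op_positive:
  assumes P: "positive_op A" and I: "invertible_op A"
  shows "positive_op (inv_op A)"
proof -
  let ?B = "inv_op A"
  have AB: "A (?B x) = x" for x
  proof -
    have "(A o\<^sub>L ?B) x = x" using inv_op_props(1)[OF I] by simp
    then show ?thesis by simp
  qed
  have sa: "selfadjoint A" using P by (simp add: positive_op_def)
  have "inner (?B x) y = inner x (?B y)" for x y
  proof -
    have "inner (?B x) y = inner (?B x) (A (?B y))" by (simp add: AB)
    also have "\<dots> = inner (A (?B x)) (?B y)" using sa by (simp add: selfadjoint_def)
    finally show ?thesis by (simp add: AB)
  qed
  moreover have "0 \<le> inner (?B x) x" for x
  proof -
    have "inner (?B x) x = inner (A (?B x)) (?B x)" by (simp add: AB inner_commute)
    then show ?thesis using P by (simp add: positive_op_def)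
  qed
  ultimately show ?thesis by (simp add: positive_op_def selfadjoint_def)
qed

context
  fixes A :: "'a::{real_inner,complete_space} op"
  assumes P: "positive_op A" and I: "invertible_op A" and nt: "\<exists>x::'a. x \<noteq> 0"
begin

definition "lo = 1 / norm (inv_op A)"
definition "hi = norm A"

lemma inv_norm_pos: "0 < norm (inv_op A)"
proof (rule ccontr)
  assume "\<not> 0 < norm (inv_op A)"
  then have "inv_op A = 0" by simp
  then have "id_blinfun = (0::'a op)" using inv_op_props(2)[OF I] by simp
  moreover obtain x :: 'a where "x \<noteq> 0" using nt by blast
  ultimately have "id_blinfun x = (0::'a op) x" by simp
  then show False using \<open>x \<noteq> 0\<close> by simp
qed

lemma lo_pos: "0 < lo"
  using inv_norm_pos by (simp add: lo_def)

lemma A_sbound: "sbound A lo hi"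
proof -
  have sa: "selfadjoint A" using P by (simp add: positive_op_def)
  have low: "lo * (norm x)^2 \<le> inner (A x) x" for x
  proof -
    let ?B = "inv_op A"
    have BA: "?B (A x) = x"
    proof -
      have "(?B o\<^sub>L A) x = x" using inv_op_props(2)[OF I] by simp
      then show ?thesis by simp
    qed
    have "(norm (?B (A x)))^2 \<le> norm ?B * inner (?B (A x)) (A x)"
      by (rule positive_norm_sq[OF inv_op_positive[OF P I]])
    then have "(norm x)^2 \<le> norm ?B * inner (A x) x" by (simp add: BA inner_commute)
    then show ?thesis using inv_norm_pos by (simp add: lo_def field_simps)
  qed
  have up: "inner (A x) x \<le> hi * (norm x)^2" for x
  proof -
    have "inner (A x) x \<le> norm (A x) * norm x" by (rule norm_cauchy_schwarz)
    also have "\<dots> \<le> norm A * norm x * norm x" by (intro mult_right_mono norm_blinfun) simp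
    finally show ?thesis by (simp add: hi_def power2_eq_square mult.assoc)
  qed
  show ?thesis using sa low up by (simp add: sbound_def)
qed

lemma lo_le_hi: "lo \<le> hi"
proof -
  obtain x :: 'a where x: "x \<noteq> 0" using nt by blast
  have "lo * (norm x)^2 \<le> hi * (norm x)^2" using A_sbound by (auto simp: sbound_def intro: order_trans)
  then show ?thesis using x by simp
qed

lemma lo_eq_hi: "lo = hi \<Longrightarrow> A = lo *\<^sub>R id_blinfun"
proof -
  assume eq: "lo = hi"
  have "norm (A - lo *\<^sub>R id_blinfun) \<le> 0"
  proof (rule selfadjoint_norm_bound)
    show "selfadjoint (A - lo *\<^sub>R id_blinfun)"
      using P by (intro selfadjoint_diff selfadjoint_scaleR selfadjoint_id) (simp add: positive_op_def)
    fix x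
    have "lo * (norm x)^2 \<le> inner (A x) x" "inner (A x) x \<le> lo * (norm x)^2"
      using A_sbound eq by (auto simp: sbound_def)
    then show "\<bar>inner ((A - lo *\<^sub>R id_blinfun) x) x\<bar> \<le> 0 * (norm x)^2"
      by (simp add: blinfun.bilinear_simps inner_diff_left power2_norm_eq_inner)
  qed simp
  then show ?thesis by simp
qed

lemma opfun_eq: "lo < hi \<Longrightarrow> opfun f A = fc A lo hi f"
  unfolding opfun_def fc_def lo_def[symmetric] hi_def[symmetric] Let_def
  by (simp add: ev_bern fc_def[OF A_sbound])

lemma opfun_eq2: "lo = hi \<Longrightarrow> opfun f A = f lo *\<^sub>R id_blinfun"
  unfolding opfun_def lo_def[symmetric] hi_def[symmetric] Let_def by simp

lemma cont_sub: "continuous_on {0<..} f \<Longrightarrow> continuous_on {lo..hi} f"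
  by (rule continuous_on_subset) (use lo_pos in auto)

lemma opfun_selfadjoint:
  assumes "continuous_on {0<..} f"
  shows "selfadjoint (opfun f A)"
proof (cases "lo = hi")
  case True then show ?thesis by (simp add: opfun_eq2 selfadjoint_scaleR)
next
  case False then have "lo < hi" using lo_le_hi by simp
  then show ?thesis using fc_selfadjoint[OF A_sbound _ cont_sub[OF assms]] by (simp add: opfun_eq)
qed

lemma opfun_pos:
  assumes "continuous_on {0<..} f" "\<And>x. 0 < x \<Longrightarrow> 0 \<le> f x"
  shows "positive_op (opfun f A)"
proof (cases "lo = hi")
  case True then show ?thesis using lo_pos assms(2) by (simp add: opfun_eq2 positive_scaleR)
next
  case False then have "lo < hi" using lo_le_hi by simp
  then show ?thesis using fc_pos[OF A_sbound _ cont_sub[OF assms(1)]] assms(2) lo_pos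
    by (simp add: opfun_eq)
qed

lemma opfun_cong:
  assumes "\<And>x. 0 < x \<Longrightarrow> f x = g x"
  shows "opfun f A = opfun g A"
proof (cases "lo = hi")
  case True then show ?thesis using lo_pos assms by (simp add: opfun_eq2)
next
  case False then have "lo < hi" using lo_le_hi by simp
  then show ?thesis using fc_cong[OF A_sbound \<open>lo < hi\<close>, of f g] assms lo_pos by (simp add: opfun_eq)
qed

lemma opfun_add:
  assumes "continuous_on {0<..} f" "continuous_on {0<..} g"
  shows "opfun (\<lambda>x. f x + g x) A = opfun f A + opfun g A"
proof (cases "lo = hi")
  case True then show ?thesis by (simp add: opfun_eq2 scaleR_add_left)
next
  case False then have "lo < hi" using lo_le_hi by simp
  then show ?thesis using fc_add[OF A_sbound \<open>lo < hi\<close> cont_sub[OF assms(1)] cont_sub[OF assms(2)]]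
    by (simp add: opfun_eq)
qed

lemma opfun_scale:
  assumes "continuous_on {0<..} f"
  shows "opfun (\<lambda>x. c * f x) A = c *\<^sub>R opfun f A"
proof (cases "lo = hi")
  case True then show ?thesis by (simp add: opfun_eq2)
next
  case False then have "lo < hi" using lo_le_hi by simp
  then show ?thesis using fc_scale[OF A_sbound \<open>lo < hi\<close> cont_sub[OF assms]]
    by (simp add: opfun_eq)
qed

lemma opfun_const: "opfun (\<lambda>x. c) A = c *\<^sub>R id_blinfun"
proof (cases "lo = hi")
  case True then show ?thesis by (simp add: opfun_eq2)
next
  case False then have "lo < hi" using lo_le_hi by simp
  then show ?thesis using fc_const[OF A_sbound \<open>lo < hi\<close>] by (simp add: opfun_eq)
qed

lemma opfun_id: "opfun (\<lambda>x. x) A = A"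
proof (cases "lo = hi")
  case True then show ?thesis using lo_eq_hi by (simp add: opfun_eq2)
next
  case False then have "lo < hi" using lo_le_hi by simp
  then show ?thesis using fc_id[OF A_sbound \<open>lo < hi\<close>] by (simp add: opfun_eq)
qed

lemma opfun_mult:
  assumes "continuous_on {0<..} f" "continuous_on {0<..} g"
  shows "opfun f A o\<^sub>L opfun g A = opfun (\<lambda>x. f x * g x) A"
proof (cases "lo = hi")
  case True then show ?thesis by (simp add: opfun_eq2 oL_simps)
next
  case False then have "lo < hi" using lo_le_hi by simp
  then show ?thesis using fc_mult[OF A_sbound \<open>lo < hi\<close> cont_sub[OF assms(1)] cont_sub[OF assms(2)]]
    by (simp add: opfun_eq)
qed

end


lemma sinh_cosh_ge: fixes w :: real assumes "0 \<le> w" shows "w \<le> sinh w * cosh w"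
proof -
  have "2 * w \<le> (exp (2 * w) - inverse (exp (2 * w))) / 2" by (rule real_le_x_sinh) (use assms in simp)
  also have "\<dots> = sinh (2 * w)" by (simp add: sinh_field_def exp_minus)
  also have "\<dots> = 2 * (sinh w * cosh w)" by (simp add: sinh_double)
  finally show ?thesis by simp
qed

lemma coth_mono:
  fixes z s :: real
  assumes z: "0 < z" and zs: "z \<le> s"
  shows "z * cosh z * sinh s \<le> s * cosh s * sinh z"
proof -
  define g where "g = (\<lambda>w::real. w * cosh w / sinh w)"
  have deriv: "(g has_real_derivative ((sinh w * cosh w - w) / (sinh w)^2)) (at w)" if w: "w \<in> {z..s}" for w
  proof -
    have wp: "0 < w" using w z by auto
    have e: "((1 * cosh w + sinh w * 1 * w) * sinh w - w * cosh w * (cosh w * 1)) / (sinh w * sinh w)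
        = (sinh w * cosh w - w) / (sinh w)^2"
    proof -
      have "(1 * cosh w + sinh w * 1 * w) * sinh w - w * cosh w * (cosh w * 1) = sinh w * cosh w - w * ((cosh w)^2 - (sinh w)^2)"
        by (simp add: power2_eq_square algebra_simps)
      also have "\<dots> = sinh w * cosh w - w" by (simp add: hyperbolic_pythagoras)
      finally show ?thesis by (simp add: power2_eq_square)
    qed
    show ?thesis unfolding g_def
      apply (rule derivative_eq_intros refl | simp add: wp)+
       apply (use wp in simp)
      by (fact e)
  qed
  have "g z \<le> g s"
  proof (rule deriv_nonneg_imp_mono[OF deriv _ zs])
    fix w assume "w \<in> {z..s}"
    then have "0 \<le> w" using z by auto
    then show "0 \<le> (sinh w * cosh w - w) / (sinh w)^2" using sinh_cosh_ge[of w] by simp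
  qed
  then have "z * cosh z / sinh z \<le> s * cosh s / sinh s" by (simp add: g_def)
  moreover have "0 < sinh z" "0 < sinh s" using z zs by auto
  ultimately show ?thesis by (simp add: field_simps)
qed

lemma cube_ineq:
  fixes z s :: real
  assumes z: "0 \<le> z" and zs: "z \<le> s"
  shows "z * sinh s * (cosh z)^3 \<le> s * (cosh s)^3 * sinh z"
proof (cases "z = 0")
  case True then show ?thesis using zs by simp
next
  case False
  then have zp: "0 < z" using z by simp
  have a: "z * cosh z * sinh s \<le> s * cosh s * sinh z" by (rule coth_mono[OF zp zs])
  have b: "(cosh z)^2 \<le> (cosh s)^2"
    using zp zs by (intro power_mono) (auto simp: cosh_real_nonneg_le_iff)
  have "(z * cosh z * sinh s) * (cosh z)^2 \<le> (s * cosh s * sinh z) * (cosh s)^2"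
    by (rule mult_mono[OF a b]) (use zp zs in auto)
  then show ?thesis by (simp add: power2_eq_square power3_eq_cube mult_ac)
qed

lemma core_ineq:
  fixes d s :: real
  assumes d: "0 \<le> d" and ds: "d \<le> s" and s: "0 < s"
  shows "(s^2 - d^2) * sinh s * (cosh d)^2 \<le> s * cosh s * ((cosh s)^2 - (cosh d)^2)"
proof -
  define T where "T = sinh s / cosh s"
  define \<psi> where "\<psi> = (\<lambda>w::real. s * (cosh s)^2 / (cosh w)^2 + T * w^2)"
  have deriv: "(\<psi> has_real_derivative (- 2 * s * (cosh s)^2 * sinh w / (cosh w)^3 + 2 * T * w)) (at w)" for w
    unfolding \<psi>_def
    apply (rule derivative_eq_intros refl | simp)+
    apply (simp add: field_simps power2_eq_square power3_eq_cube eval_nat_numeral)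
    done
  have "\<psi> s \<le> \<psi> d"
  proof (rule deriv_nonpos_imp_antimono[OF deriv _ ds])
    fix w assume w: "w \<in> {d..s}"
    then have w0: "0 \<le> w" "w \<le> s" using d by auto
    have "w * sinh s * (cosh w)^3 \<le> s * (cosh s)^3 * sinh w" by (rule cube_ineq[OF w0])
    then have "T * w \<le> s * (cosh s)^2 * sinh w / (cosh w)^3"
      by (simp add: T_def field_simps power2_eq_square power3_eq_cube)
    then show "- 2 * s * (cosh s)^2 * sinh w / (cosh w)^3 + 2 * T * w \<le> 0" by simp
  qed
  then have "s + T * s^2 \<le> s * (cosh s)^2 / (cosh d)^2 + T * d^2"
    by (simp add: \<psi>_def)
  then have m: "(s + T * s^2) * (cosh s * (cosh d)^2) \<le> (s * (cosh s)^2 / (cosh d)^2 + T * d^2) * (cosh s * (cosh d)^2)"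
    by (rule mult_right_mono) simp
  have l: "(s + T * s^2) * (cosh s * (cosh d)^2) = s * cosh s * (cosh d)^2 + s^2 * sinh s * (cosh d)^2"
    by (simp add: T_def field_simps)
  have r: "(s * (cosh s)^2 / (cosh d)^2 + T * d^2) * (cosh s * (cosh d)^2) = s * cosh s * (cosh s)^2 + d^2 * sinh s * (cosh d)^2"
    by (simp add: T_def field_simps power2_eq_square)
  have e: "(s^2 - d^2) * sinh s * (cosh d)^2 = s^2 * sinh s * (cosh d)^2 - d^2 * sinh s * (cosh d)^2"
    "s * cosh s * ((cosh s)^2 - (cosh d)^2) = s * cosh s * (cosh s)^2 - s * cosh s * (cosh d)^2"
    by (simp_all add: algebra_simps)
  show ?thesis using m unfolding l r e by linarith
qed

lemma K_ineq:
  fixes d s :: real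
  assumes d: "0 \<le> d" and ds: "d \<le> s" and s: "0 < s"
  shows "(s^2 - d^2) * (cosh s - 1) * (1 + cosh d) \<le> 2 * s * sinh s * (cosh s - cosh d)"
proof -
  define a b where "a = s / 2" and "b = d / 2"
  have a: "0 < a" and b: "0 \<le> b" "b \<le> a" using d ds s by (auto simp: a_def b_def)
  have c: "(a^2 - b^2) * sinh a * (cosh b)^2 \<le> a * cosh a * ((cosh a)^2 - (cosh b)^2)"
    by (rule core_ineq[OF b a])
  have sa: "0 \<le> sinh a" using a by simp
  have ineq: "16 * sinh a * ((a^2 - b^2) * sinh a * (cosh b)^2) \<le> 16 * sinh a * (a * cosh a * ((cosh a)^2 - (cosh b)^2))"
    using c sa by (intro mult_left_mono) auto
  have sd: "s = 2 * a" "d = 2 * b" by (auto simp: a_def b_def)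
  have e1: "cosh s - 1 = 2 * (sinh a)^2" unfolding sd cosh_double_cosh by (simp add: cosh_square_eq)
  have e2: "1 + cosh d = 2 * (cosh b)^2" unfolding sd cosh_double_cosh by simp
  have e3: "sinh s = 2 * sinh a * cosh a" unfolding sd sinh_double ..
  have e4: "cosh s - cosh d = 2 * ((cosh a)^2 - (cosh b)^2)" unfolding sd cosh_double_cosh by simp
  have l: "(s^2 - d^2) * (cosh s - 1) * (1 + cosh d) = 16 * sinh a * ((a^2 - b^2) * sinh a * (cosh b)^2)"
    unfolding e1 e2 unfolding sd by (simp add: algebra_simps power2_eq_square)
  have r: "2 * s * sinh s * (cosh s - cosh d) = 16 * sinh a * (a * cosh a * ((cosh a)^2 - (cosh b)^2))"
    unfolding e3 e4 unfolding sd by (simp add: algebra_simps power2_eq_square)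
  show ?thesis unfolding l r by (rule ineq)
qed

lemma K_abs:
  fixes d s :: real
  assumes "\<bar>d\<bar> \<le> \<bar>s\<bar>" "s \<noteq> 0"
  shows "(s^2 - d^2) * (cosh s - 1) * (1 + cosh d) \<le> 2 * s * sinh s * (cosh s - cosh d)"
proof -
  have A: "(\<bar>s\<bar>^2 - \<bar>d\<bar>^2) * (cosh \<bar>s\<bar> - 1) * (1 + cosh \<bar>d\<bar>) \<le> 2 * \<bar>s\<bar> * sinh \<bar>s\<bar> * (cosh \<bar>s\<bar> - cosh \<bar>d\<bar>)"
    by (rule K_ineq) (use assms in auto)
  have B: "2 * \<bar>s\<bar> * sinh \<bar>s\<bar> * (cosh \<bar>s\<bar> - cosh \<bar>d\<bar>) = 2 * s * sinh s * (cosh s - cosh d)"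
    by (cases "0 \<le> s") auto
  have C: "(\<bar>s\<bar>^2 - \<bar>d\<bar>^2) * (cosh \<bar>s\<bar> - 1) * (1 + cosh \<bar>d\<bar>) = (s^2 - d^2) * (cosh s - 1) * (1 + cosh d)"
    by simp
  show ?thesis using A unfolding B C .
qed

lemma T_ineq:
  fixes x p :: real
  assumes x: "0 < x" "x \<noteq> 1" and p: "0 < p" "p < 1"
  shows "p * (1 - p) * (x - 1)^2 / ((x powr p - 1) * (x powr (1 - p) - 1))
         \<le> 2 * p * (1 - p) * ((1 + x) / 2 - x powr (1/2)) + (x - 1) / ln x"
proof -
  define y where "y = ln x"
  have y0: "y \<noteq> 0" using x by (simp add: y_def)
  define s where "s = y / 2"
  define d where "d = (2 * p - 1) * s"
  have s0: "s \<noteq> 0" using y0 by (simp add: s_def)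
  have ds: "\<bar>d\<bar> < \<bar>s\<bar>"
  proof -
    have "\<bar>2 * p - 1\<bar> < 1" using p by auto
    then show ?thesis using s0 by (simp add: d_def abs_mult)
  qed
  define E F where "E = exp s" and "F = exp d"
  have E0: "0 < E" and F0: "0 < F" by (auto simp: E_def F_def)
  define C D S where "C = cosh s" and "D = cosh d" and "S = sinh s"
  have C: "C = (E + inverse E) / 2" by (simp add: C_def E_def cosh_field_def exp_minus)
  have D: "D = (F + inverse F) / 2" by (simp add: D_def F_def cosh_field_def exp_minus)
  have S: "S = (E - inverse E) / 2" by (simp add: S_def E_def sinh_field_def exp_minus)
  have CD: "D < C"
  proof -
    have "cosh \<bar>d\<bar> < cosh \<bar>s\<bar>" using ds by (subst cosh_real_nonneg_less_iff) auto
    then show ?thesis by (simp add: C_def D_def)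
  qed
  have xE: "x = E * E" using x by (simp add: E_def s_def y_def exp_add[symmetric])
  have xp: "x powr p = E * F"
  proof -
    have "x powr p = exp (p * y)" using x by (simp add: powr_def y_def)
    also have "p * y = s + d" by (simp add: d_def s_def algebra_simps)
    finally show ?thesis by (simp add: exp_add E_def F_def)
  qed
  have xq: "x powr (1 - p) = E / F"
  proof -
    have "x powr (1 - p) = exp ((1 - p) * y)" using x by (simp add: powr_def y_def)
    also have "(1 - p) * y = s - d" by (simp add: d_def s_def algebra_simps)
    finally show ?thesis by (simp add: exp_diff E_def F_def)
  qed
  have xh: "x powr (1/2) = E" using x by (simp add: powr_def y_def E_def s_def)
  have lnx: "ln x = 2 * s" by (simp add: s_def y_def)
  define P where "P = s^2 - d^2"
  have pq: "p * (1 - p) = P / (4 * s^2)"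
  proof -
    have "P = 4 * (p * (1 - p)) * s^2" by (simp add: P_def d_def power2_eq_square algebra_simps)
    then show ?thesis using s0 by simp
  qed
  have K: "P * (C - 1) * (1 + D) \<le> 2 * s * S * (C - D)"
    using K_abs[of d s] ds s0 by (simp add: P_def C_def D_def S_def)
  have SS0: "S^2 = C^2 - 1" by (simp add: S_def C_def sinh_square_eq)
  have SS: "S^2 = (C - 1) * (C + 1)" unfolding SS0 by (simp add: power2_eq_square algebra_simps)
  have key: "P * S^2 \<le> P * (C - 1) * (C - D) + 2 * s * S * (C - D)"
  proof -
    have "P * S^2 = P * (C - 1) * (C - D) + P * (C - 1) * (1 + D)" unfolding SS by (simp add: algebra_simps)
    then show ?thesis using K by linarith
  qed
  have pos: "0 < 2 * s^2 * (C - D)" using s0 CD by simp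
  have key2: "P * S^2 / (2 * s^2 * (C - D)) \<le> P * (C - 1) / (2 * s^2) + S / s"
  proof -
    have "P * S^2 / (2 * s^2 * (C - D)) \<le> (P * (C - 1) * (C - D) + 2 * s * S * (C - D)) / (2 * s^2 * (C - D))"
      using key pos by (intro divide_right_mono) auto
    also have "\<dots> = P * (C - 1) / (2 * s^2) + S / s" using s0 CD by (simp add: field_simps power2_eq_square)
    finally show ?thesis .
  qed
  have i1: "(x - 1)^2 = 4 * E^2 * S^2" unfolding xE S using E0 by (simp add: field_simps power2_eq_square)
  have i2: "(x powr p - 1) * (x powr (1 - p) - 1) = 2 * E * (C - D)"
    unfolding xp xq C D using E0 F0 by (simp add: field_simps)
  have i3: "(1 + x) / 2 - x powr (1/2) = E * (C - 1)" apply (subst xh) unfolding xE C using E0 by (simp add: field_simps)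
  have i4: "(x - 1) / ln x = E * (S / s)"
    apply (subst lnx) unfolding xE S using E0 s0 by (simp add: field_simps power2_eq_square)
  have lhs: "p * (1 - p) * (x - 1)^2 / ((x powr p - 1) * (x powr (1 - p) - 1)) = E * (P * S^2 / (2 * s^2 * (C - D)))"
    unfolding pq i1 i2 using E0 s0 CD by (simp add: field_simps power2_eq_square)
  have rhs: "2 * p * (1 - p) * ((1 + x) / 2 - x powr (1/2)) + (x - 1) / ln x = E * (P * (C - 1) / (2 * s^2) + S / s)"
  proof -
    have "2 * p * (1 - p) * ((1 + x) / 2 - x powr (1/2)) = 2 * (p * (1 - p)) * ((1 + x) / 2 - x powr (1/2))" by simp
    also have "\<dots> = E * (P * (C - 1) / (2 * s^2))" unfolding pq i3 using s0 by (simp add: field_simps power2_eq_square)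
    finally show ?thesis unfolding i4 by (simp add: algebra_simps)
  qed
  show ?thesis unfolding lhs rhs using key2 E0 by (intro mult_left_mono) auto
qed


lemma fWYD_ineq:
  assumes x: "0 < x" and p: "0 \<le> p" "p \<le> 1"
  shows "fWYD p x \<le> 2 * p * (1 - p) * ((1 + x) / 2 - x powr (1/2)) + fWYD 0 x"
proof (cases "x = 1")
  case True then show ?thesis by (simp add: fWYD_def)
next
  case x1: False
  show ?thesis
  proof (cases "p = 0 \<or> p = 1")
    case True then show ?thesis using x1 by (auto simp: fWYD_def)
  next
    case False
    then have "0 < p" "p < 1" using p by auto
    then show ?thesis using T_ineq[OF x x1] x1 False by (simp add: fWYD_def)
  qed
qed

lemma powr_has_integral:
  assumes c: "0 < c"
  shows "((\<lambda>t. c powr t) has_integral fWYD 0 c) {0..1}"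
proof (cases "c = 1")
  case True
  then show ?thesis using has_integral_const_real[of 1 0 1] by (simp add: fWYD_def)
next
  case False
  then have lc: "ln c \<noteq> 0" using c by simp
  have eq: "(\<lambda>t. c powr t) = (\<lambda>t. exp (t * ln c))" using c by (simp add: powr_def)
  have "((\<lambda>t. exp (t * ln c)) has_integral ((\<lambda>t. exp (t * ln c) / ln c) 1 - (\<lambda>t. exp (t * ln c) / ln c) 0)) {0..1}"
  proof (rule fundamental_theorem_of_calculus)
    fix t :: real
    have "((\<lambda>t. exp (t * ln c) / ln c) has_real_derivative exp (t * ln c)) (at t)"
      by (rule derivative_eq_intros refl | simp add: lc)+
    then show "((\<lambda>t. exp (t * ln c) / ln c) has_vector_derivative exp (t * ln c)) (at t within {0..1})"
      by (simp add: has_real_derivative_iff_has_vector_derivative[symmetric] has_field_derivative_at_within)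
  qed simp
  moreover have "(\<lambda>t. exp (t * ln c) / ln c) 1 - (\<lambda>t. exp (t * ln c) / ln c) 0 = fWYD 0 c"
    using c False by (simp add: fWYD_def diff_divide_distrib)
  ultimately show ?thesis unfolding eq by simp
qed

lemma fWYD_cont:
  assumes p: "0 \<le> p" "p \<le> 1"
  shows "continuous_on {0<..} (fWYD p)"
proof -
  have cp: "isCont (\<lambda>y. y powr r) x" if "0 < x" for x r :: real
    by (rule DERIV_isCont[OF has_real_derivative_powr[OF that]])
  have "isCont (fWYD p) x" if x: "0 < x" for x
  proof (cases "x = 1")
    case False
    define g where "g = (if p = 0 \<or> p = 1 then (\<lambda>y. (y - 1) / ln y)
                       else (\<lambda>y. p * (1 - p) * (y - 1)^2 / ((y powr p - 1) * (y powr (1 - p) - 1))))"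
    have ev: "eventually (\<lambda>y. fWYD p y = g y) (nhds x)"
      using t1_space_nhds[OF False] by eventually_elim (auto simp: fWYD_def g_def)
    have "isCont g x"
    proof (cases "p = 0 \<or> p = 1")
      case True
      have "isCont (\<lambda>y. (y - 1) / ln y) x"
        using x False by (intro continuous_intros) auto
      then show ?thesis using True by (simp add: g_def)
    next
      case pF: False
      then have p01: "0 < p" "p < 1" using p by auto
      have n1: "x powr p \<noteq> 1" using x False p01 by (auto simp: powr_def)
      have n2: "x powr (1 - p) \<noteq> 1" using x False p01 by (auto simp: powr_def)
      have "isCont (\<lambda>y. p * (1 - p) * (y - 1)^2 / ((y powr p - 1) * (y powr (1 - p) - 1))) x"
        using n1 n2 by (intro continuous_intros cp x) auto
      then show ?thesis using pF by (simp add: g_def)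
    qed
    then show ?thesis using isCont_cong[OF ev] by simp
  next
    case True
    have ev1: "eventually (\<lambda>y. 0 < y \<and> y \<noteq> 1) (at (1::real))"
      unfolding eventually_at by (intro exI[of _ 1]) (auto simp: dist_real_def)
    have lim: "(fWYD p \<longlongrightarrow> 1) (at 1)"
    proof (cases "p = 0 \<or> p = 1")
      case True
      have "((\<lambda>y. (ln y - ln 1) / (y - 1)) \<longlongrightarrow> inverse 1) (at (1::real))"
        using DERIV_ln[of 1] by (simp add: has_field_derivative_iff)
      then have "((\<lambda>y. inverse ((ln y - ln 1) / (y - 1))) \<longlongrightarrow> inverse (inverse 1)) (at (1::real))"
        by (rule tendsto_inverse) simp
      then have "((\<lambda>y. inverse ((ln y - ln 1) / (y - 1))) \<longlongrightarrow> 1) (at (1::real))" by simp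
      moreover have "eventually (\<lambda>y. inverse ((ln y - ln 1) / (y - 1)) = fWYD p y) (at 1)"
        using ev1 by eventually_elim (use True in \<open>auto simp: fWYD_def\<close>)
      ultimately show ?thesis by (rule Lim_transform_eventually)
    next
      case False
      then have p01: "0 < p" "p < 1" using p by auto
      have q: "((\<lambda>y. (y powr r - 1) / (y - 1)) \<longlongrightarrow> r) (at (1::real))" for r
        using has_real_derivative_powr[of 1 r] by (simp add: has_field_derivative_iff)
      have "((\<lambda>y. p * (1 - p) * inverse ((y powr p - 1) / (y - 1) * ((y powr (1 - p) - 1) / (y - 1))))
             \<longlongrightarrow> p * (1 - p) * inverse (p * (1 - p))) (at (1::real))"
        using p01 by (intro tendsto_intros q) auto
      then have "((\<lambda>y. p * (1 - p) * inverse ((y powr p - 1) / (y - 1) * ((y powr (1 - p) - 1) / (y - 1))))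
             \<longlongrightarrow> 1) (at (1::real))"
      proof -
        have "p * (1 - p) * inverse (p * (1 - p)) = 1" using p01 by (simp add: field_simps)
        with \<open>((\<lambda>y. p * (1 - p) * inverse ((y powr p - 1) / (y - 1) * ((y powr (1 - p) - 1) / (y - 1))))
             \<longlongrightarrow> p * (1 - p) * inverse (p * (1 - p))) (at (1::real))\<close> show ?thesis by (simp only:)
      qed
      moreover have "eventually (\<lambda>y. p * (1 - p) * inverse ((y powr p - 1) / (y - 1) * ((y powr (1 - p) - 1) / (y - 1))) = fWYD p y) (at 1)"
        using ev1
      proof eventually_elim
        case (elim y)
        then have "y - 1 \<noteq> 0" by simp
        then have "inverse ((y powr p - 1) / (y - 1) * ((y powr (1 - p) - 1) / (y - 1)))
            = (y - 1)^2 / ((y powr p - 1) * (y powr (1 - p) - 1))"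
          by (simp add: divide_inverse inverse_mult_distrib power2_eq_square mult_ac)
        then show ?case using elim False by (simp add: fWYD_def)
      qed
      ultimately show ?thesis by (rule Lim_transform_eventually)
    qed
    then show ?thesis using True by (simp add: continuous_at fWYD_def)
  qed
  then show ?thesis by (simp add: continuous_on_eq_continuous_at)
qed


lemma unif_cont_bound2:
  fixes h :: "real \<times> real \<Rightarrow> real"
  assumes cont: "continuous_on ({c..d} \<times> {a..b}) h" and e: "0 < e"
  shows "\<exists>K\<ge>0. \<forall>t\<in>{c..d}. \<forall>x\<in>{a..b}. \<forall>y\<in>{a..b}. \<bar>h (t, x) - h (t, y)\<bar> \<le> e + K * (x - y)^2"
proof -
  have cpt: "compact ({c..d} \<times> {a..b})" by (intro compact_Times) auto
  have "uniformly_continuous_on ({c..d} \<times> {a..b}) h"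
    by (rule compact_uniformly_continuous[OF cont cpt])
  then obtain \<delta> where d: "0 < \<delta>" and dd: "\<And>z z'. z \<in> {c..d} \<times> {a..b} \<Longrightarrow> z' \<in> {c..d} \<times> {a..b} \<Longrightarrow> dist z' z < \<delta> \<Longrightarrow> dist (h z') (h z) < e"
    using e unfolding uniformly_continuous_on_def by metis
  have "bounded (h ` ({c..d} \<times> {a..b}))"
    by (rule compact_imp_bounded, rule compact_continuous_image[OF cont cpt])
  then obtain M where M0: "\<forall>z\<in>{c..d} \<times> {a..b}. \<bar>h z\<bar> \<le> M"
    unfolding bounded_iff by auto
  define K where "K = 2 * max M 0 / \<delta>^2"
  have K0: "0 \<le> K" using d by (simp add: K_def)
  have "\<bar>h (t, x) - h (t, y)\<bar> \<le> e + K * (x - y)^2" if t: "t \<in> {c..d}" and x: "x \<in> {a..b}" and y: "y \<in> {a..b}" for t x y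
  proof (cases "\<bar>x - y\<bar> < \<delta>")
    case True
    have "dist (t, y) (t, x) = \<bar>x - y\<bar>" by (simp add: dist_Pair_Pair dist_real_def abs_minus_commute)
    then have "\<bar>h (t, y) - h (t, x)\<bar> < e" using dd[of "(t, x)" "(t, y)"] t x y True by (simp add: dist_real_def)
    moreover have "0 \<le> K * (x - y)^2" using K0 by simp
    ultimately show ?thesis by (simp add: abs_minus_commute)
  next
    case False
    then have "\<delta>^2 \<le> (x - y)^2" using d by (metis abs_le_square_iff not_less abs_of_pos)
    then have "K * \<delta>^2 \<le> K * (x - y)^2" using K0 by (rule mult_left_mono)
    moreover have "K * \<delta>^2 = 2 * max M 0" using d by (simp add: K_def)
    moreover have "\<bar>h (t, x) - h (t, y)\<bar> \<le> 2 * max M 0"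
    proof -
      have "\<bar>h (t, x)\<bar> \<le> M" "\<bar>h (t, y)\<bar> \<le> M" using M0 t x y by auto
      moreover have "M \<le> max M 0" by simp
      ultimately show ?thesis by linarith
    qed
    ultimately show ?thesis using e by linarith
  qed
  then show ?thesis using K0 by blast
qed

notation Henstock_Kurzweil_Integration.content ("content")
hide_const (open) Polynomial.content

lemma has_integral_unif_limit:
  fixes F :: "nat \<Rightarrow> real \<Rightarrow> 'b::real_normed_vector" and G :: "real \<Rightarrow> 'b"
  assumes le: "a \<le> b" and int: "\<And>n. (F n has_integral I n) {a..b}" and lim: "I \<longlonglongrightarrow> J"
    and unif: "\<And>e. 0 < e \<Longrightarrow> \<exists>N. \<forall>n\<ge>N. \<forall>t\<in>{a..b}. norm (F n t - G t) \<le> e"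
  shows "(G has_integral J) {a..b}"
  unfolding has_integral_real
proof (intro allI impI)
  fix e :: real assume e: "0 < e"
  define c where "c = b - a + 1"
  have c: "0 < c" using le by (simp add: c_def)
  obtain N1 where N1: "\<forall>n\<ge>N1. norm (I n - J) < e / 3"
    using lim e unfolding LIMSEQ_iff by (metis divide_pos_pos zero_less_numeral)
  obtain N2 where N2: "\<forall>n\<ge>N2. \<forall>t\<in>{a..b}. norm (F n t - G t) \<le> e / (3 * c)"
    using unif[of "e / (3 * c)"] e c by auto
  define n where "n = max N1 N2"
  have In: "norm (I n - J) < e / 3" using N1 by (simp add: n_def)
  have Fn: "\<forall>t\<in>{a..b}. norm (F n t - G t) \<le> e / (3 * c)" using N2 by (simp add: n_def)
  obtain \<gamma> where g: "gauge \<gamma>" and gD: "\<And>D. D tagged_division_of {a..b} \<Longrightarrow> \<gamma> fine D \<Longrightarrow>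
      norm ((\<Sum>(x,k)\<in>D. content k *\<^sub>R F n x) - I n) < e / 3"
    using int[of n] e unfolding has_integral_real by (metis divide_pos_pos zero_less_numeral)
  show "\<exists>\<gamma>. gauge \<gamma> \<and> (\<forall>D. D tagged_division_of {a..b} \<and> \<gamma> fine D \<longrightarrow>
          norm ((\<Sum>(x,k)\<in>D. content k *\<^sub>R G x) - J) < e)"
  proof (intro exI conjI allI impI)
    show "gauge \<gamma>" by (rule g)
    fix D assume D: "D tagged_division_of {a..b} \<and> \<gamma> fine D"
    have fin: "finite D" using D by auto
    have eq: "(\<Sum>(x,k)\<in>D. content k *\<^sub>R G x) - J
        = (\<Sum>(x,k)\<in>D. content k *\<^sub>R (G x - F n x)) + (((\<Sum>(x,k)\<in>D. content k *\<^sub>R F n x) - I n) + (I n - J))"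
      by (simp add: scaleR_diff_right sum_subtractf case_prod_unfold)
    have b1: "norm (\<Sum>(x,k)\<in>D. content k *\<^sub>R (G x - F n x)) \<le> (\<Sum>(x,k)\<in>D. content k * (e / (3 * c)))"
    proof -
      have "norm (\<Sum>(x,k)\<in>D. content k *\<^sub>R (G x - F n x)) \<le> (\<Sum>(x,k)\<in>D. norm (content k *\<^sub>R (G x - F n x)))"
        by (rule order_trans[OF norm_sum]) (simp add: case_prod_unfold)
      also have "\<dots> \<le> (\<Sum>(x,k)\<in>D. content k * (e / (3 * c)))"
      proof (rule sum_mono)
        fix z assume z: "z \<in> D"
        obtain x k where zk: "z = (x, k)" by force
        have "x \<in> {a..b}" using D z zk by blast
        then have "norm (G x - F n x) \<le> e / (3 * c)" using Fn by (metis norm_minus_commute)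
        then show "(case z of (x, k) \<Rightarrow> norm (content k *\<^sub>R (G x - F n x))) \<le> (case z of (x, k) \<Rightarrow> content k * (e / (3 * c)))"
        proof -
          have "content k * norm (G x - F n x) \<le> content k * (e / (3 * c))"
            using \<open>norm (G x - F n x) \<le> e / (3 * c)\<close> by (rule mult_left_mono) simp
          then show ?thesis unfolding zk by simp
        qed
      qed
      finally show ?thesis .
    qed
    have "(\<Sum>(x,k)\<in>D. content k * (e / (3 * c))) = (\<Sum>(x,k)\<in>D. content k) * (e / (3 * c))"
      by (simp only: sum_distrib_right case_prod_unfold)
    also have "(\<Sum>(x,k)\<in>D. content k) = b - a"
      using additive_content_tagged_division[of D a b] D le by (simp add: box_real)
    finally have "(\<Sum>(x,k)\<in>D. content k * (e / (3 * c))) = (b - a) * (e / (3 * c))" .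
    also have "\<dots> < e / 3" using c e le by (simp add: c_def field_simps)
    finally have b1': "norm (\<Sum>(x,k)\<in>D. content k *\<^sub>R (G x - F n x)) < e / 3" using b1 by linarith
    have b2: "norm ((\<Sum>(x,k)\<in>D. content k *\<^sub>R F n x) - I n) < e / 3" using gD D by blast
    have "norm ((\<Sum>(x,k)\<in>D. content k *\<^sub>R G x) - J)
        \<le> norm (\<Sum>(x,k)\<in>D. content k *\<^sub>R (G x - F n x)) + (norm ((\<Sum>(x,k)\<in>D. content k *\<^sub>R F n x) - I n) + norm (I n - J))"
      unfolding eq by (intro order_trans[OF norm_triangle_ineq] add_left_mono norm_triangle_ineq)
    then show "norm ((\<Sum>(x,k)\<in>D. content k *\<^sub>R G x) - J) < e" using b1' b2 In by linarith
  qed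
qed


context
  fixes A :: "'a::{real_inner,complete_space} op"
  assumes P: "positive_op A" and I: "invertible_op A" and nt: "\<exists>x::'a. x \<noteq> 0"
begin

lemma opfun_powr_integral:
  "((\<lambda>t. opfun (\<lambda>x. x powr t) A) has_integral opfun (fWYD 0) A) {0..1}"
proof (cases "lo A = hi A")
  case True
  have "((\<lambda>t. (lo A powr t) *\<^sub>R id_blinfun) has_integral (fWYD 0 (lo A) *\<^sub>R (id_blinfun :: 'a op))) {0..1}"
    by (rule has_integral_scaleR_left[OF powr_has_integral[OF lo_pos[OF P I nt]]])
  then show ?thesis using opfun_eq2[OF P I nt True] by simp
next
  case False
  define a b where "a = lo A" and "b = hi A"
  have ab: "a < b" using False lo_le_hi[OF P I nt] by (simp add: a_def b_def)
  have a0: "0 < a" using lo_pos[OF P I nt] by (simp add: a_def)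
  have sb: "sbound A a b" using A_sbound[OF P I nt] by (simp add: a_def b_def)
  have opf: "opfun f A = fc A a b f" for f using opfun_eq[OF P I nt] ab by (simp add: a_def b_def)
  have cpow: "continuous_on {a..b} (\<lambda>x. x powr t)" for t
    using a0 by (intro continuous_intros) auto
  have cL: "continuous_on {a..b} (fWYD 0)"
    by (rule continuous_on_subset[OF fWYD_cont]) (use a0 in auto)
  define F where "F = (\<lambda>n t. ev A (bern (\<lambda>x. x powr t) a b n))"
  define W where "W = (\<lambda>n k. ev A (uP a b ^ k * vP a b ^ (n - k)))"
  have nodepos: "0 < node a b n k" if "k \<le> n" for n k
    using node_in[of a b k n] that ab a0 by auto
  have int: "(F n has_integral ev A (bern (fWYD 0) a b n)) {0..1}" for n
  proof -
    have Feq: "F n = (\<lambda>t. \<Sum>k\<le>n. (node a b n k powr t * real (n choose k)) *\<^sub>R W n k)"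
      by (simp add: F_def W_def bern_def ev_sum ev_smult)
    have Ieq: "ev A (bern (fWYD 0) a b n) = (\<Sum>k\<le>n. (fWYD 0 (node a b n k) * real (n choose k)) *\<^sub>R W n k)"
      by (simp add: W_def bern_def ev_sum ev_smult)
    show ?thesis unfolding Feq Ieq
      by (intro has_integral_sum has_integral_scaleR_left has_integral_mult_left powr_has_integral nodepos) auto
  qed
  have lim: "(\<lambda>n. ev A (bern (fWYD 0) a b n)) \<longlonglongrightarrow> opfun (fWYD 0) A"
    unfolding opf by (rule fc_tendsto[OF sb ab cL])
  have unif: "\<exists>N. \<forall>n\<ge>N. \<forall>t\<in>{0..1}. norm (F n t - opfun (\<lambda>x. x powr t) A) \<le> e" if e: "0 < e" for e
  proof -
    define h where "h = (\<lambda>z::real \<times> real. snd z powr fst z)"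
    have ch: "continuous_on ({0..1} \<times> {a..b}) h"
      unfolding h_def using a0 by (intro continuous_intros) auto
    obtain K where K: "0 \<le> K" and Kb: "\<forall>t\<in>{0..1}. \<forall>x\<in>{a..b}. \<forall>y\<in>{a..b}. \<bar>h (t, x) - h (t, y)\<bar> \<le> e / 2 + K * (x - y)^2"
      using unif_cont_bound2[OF ch, of "e/2"] e by auto
    define K' where "K' = K * (b - a)^2"
    have K': "0 \<le> K'" using K by (simp add: K'_def)
    define N where "N = nat (ceiling (2 * K' / e)) + 1"
    have N1: "1 \<le> N" by (simp add: N_def)
    have "norm (F n t - opfun (\<lambda>x. x powr t) A) \<le> e" if n: "N \<le> n" and t: "t \<in> {0..1}" for n t
    proof -
      have n1: "1 \<le> n" using n N1 by simp
      have fb: "\<forall>x\<in>{a..b}. \<forall>y\<in>{a..b}. \<bar>x powr t - y powr t\<bar> \<le> e / 2 + K * (x - y)^2"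
        using Kb t by (simp add: h_def)
      have "norm (F n t - opfun (\<lambda>x. x powr t) A) \<le> e / 2 + K' / real n"
        unfolding F_def opf K'_def using fc_approx[OF sb ab cpow n1 _ K fb] e by simp
      also have "K' / real n \<le> e / 2"
      proof -
        have "2 * K' / e < real N" unfolding N_def by linarith
        also have "\<dots> \<le> real n" using n by simp
        finally have "2 * K' < e * real n" using e by (simp add: field_simps)
        then show ?thesis using n1 by (simp add: field_simps)
      qed
      finally show ?thesis by simp
    qed
    then show ?thesis by blast
  qed
  show ?thesis
    by (rule has_integral_unif_limit[OF _ int lim unif]) auto
qed

end


lemma cont_powr: "continuous_on {0<..} (\<lambda>x::real. x powr r)"
  by (intro continuous_intros) auto

lemma cont_fWYD_h:
  assumes "0 \<le> p" "p \<le> 1"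
  shows "continuous_on {0<..} (\<lambda>x. c * ((1/2) * (1 + x) - x powr (1/2)) + (fWYD 0 x - fWYD p x))"
  using fWYD_cont[OF assms] fWYD_cont[of 0] by (intro continuous_intros) auto

lemma opfun_diff:
  assumes P: "positive_op A" and I: "invertible_op A" and nt: "\<exists>x::'a. x \<noteq> 0"
    and cf: "continuous_on {0<..} f" and cg: "continuous_on {0<..} g"
  shows "opfun (\<lambda>x. f x - g x) (A :: 'a::{real_inner,complete_space} op) = opfun f A - opfun g A"
proof -
  have cg': "continuous_on {0<..} (\<lambda>x. (-1) * g x)" using cg by (intro continuous_intros)
  have "opfun (\<lambda>x. f x - g x) A = opfun (\<lambda>x. f x + (-1) * g x) A" by simp
  also have "\<dots> = opfun f A + opfun (\<lambda>x. (-1) * g x) A" by (rule opfun_add[OF P I nt cf cg'])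
  also have "opfun (\<lambda>x. (-1) * g x) A = (-1) *\<^sub>R opfun g A" by (rule opfun_scale[OF P I nt cg])
  finally show ?thesis by simp
qed

theorem corollary4p1:
  fixes S T :: "'a::{real_inner, complete_space} \<Rightarrow>\<^sub>L 'a"
    and p :: real
  assumes "positive_op S" "invertible_op S"
    and "positive_op T" "invertible_op T"
    and "0 \<le> p" "p \<le> 1"
  shows "loewner_le (WYD p S T)
           ((2 * p * (1 - p)) *\<^sub>R (amean S T - gmean S T) + logmean S T)"
proof (cases "\<exists>x::'a. x \<noteq> 0")
  case False
  then have z: "\<And>B C :: 'a op. B = C" by (metis blinfun_eqI)
  show ?thesis unfolding loewner_le_def
    using z[of "((2 * p * (1 - p)) *\<^sub>R (amean S T - gmean S T) + logmean S T) - WYD p S T" 0] by simp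
next
  case True
  note nt = True
  note PS = assms(1) and IS = assms(2) and PT = assms(3) and IT = assms(4) and p = assms(5,6)
  define Sh where "Sh = opfun (\<lambda>x. x powr (1/2)) S"
  define Smh where "Smh = opfun (\<lambda>x. x powr (-1/2)) S"
  have saSh: "selfadjoint Sh" unfolding Sh_def by (rule opfun_selfadjoint[OF PS IS nt cont_powr])
  have saSmh: "selfadjoint Smh" unfolding Smh_def by (rule opfun_selfadjoint[OF PS IS nt cont_powr])
  have ShSh: "Sh o\<^sub>L Sh = S"
  proof -
    have "Sh o\<^sub>L Sh = opfun (\<lambda>x. x powr (1/2) * x powr (1/2)) S"
      unfolding Sh_def by (rule opfun_mult[OF PS IS nt cont_powr cont_powr])
    also have "\<dots> = opfun (\<lambda>x. x) S"
      by (rule opfun_cong[OF PS IS nt]) (simp add: powr_add[symmetric])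
    also have "\<dots> = S" by (rule opfun_id[OF PS IS nt])
    finally show ?thesis .
  qed
  have ShSmh: "Sh o\<^sub>L Smh = id_blinfun"
  proof -
    have "Sh o\<^sub>L Smh = opfun (\<lambda>x. x powr (1/2) * x powr (-1/2)) S"
      unfolding Sh_def Smh_def by (rule opfun_mult[OF PS IS nt cont_powr cont_powr])
    also have "\<dots> = opfun (\<lambda>x. 1) S"
      by (rule opfun_cong[OF PS IS nt]) (simp add: powr_add[symmetric])
    also have "\<dots> = id_blinfun" using opfun_const[OF PS IS nt, of 1] by simp
    finally show ?thesis .
  qed
  have SmhSh: "Smh o\<^sub>L Sh = id_blinfun"
  proof -
    have "Smh o\<^sub>L Sh = opfun (\<lambda>x. x powr (-1/2) * x powr (1/2)) S"
      unfolding Sh_def Smh_def by (rule opfun_mult[OF PS IS nt cont_powr cont_powr])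
    also have "\<dots> = opfun (\<lambda>x. 1) S"
      by (rule opfun_cong[OF PS IS nt]) (simp add: powr_add[symmetric])
    also have "\<dots> = id_blinfun" using opfun_const[OF PS IS nt, of 1] by simp
    finally show ?thesis .
  qed
  have a1: "Sh (Smh v) = v" for v using ShSmh by (metis blinfun_apply_blinfun_compose blinfun_apply_id_blinfun)
  have a2: "Smh (Sh v) = v" for v using SmhSh by (metis blinfun_apply_blinfun_compose blinfun_apply_id_blinfun)
  have a3: "Sh (Sh v) = S v" for v using ShSh by (metis blinfun_apply_blinfun_compose)
  have a4: "T (inv_op T v) = v" for v using inv_op_props(1)[OF IT] by (metis blinfun_apply_blinfun_compose blinfun_apply_id_blinfun)
  have a5: "inv_op T (T v) = v" for v using inv_op_props(2)[OF IT] by (metis blinfun_apply_blinfun_compose blinfun_apply_id_blinfun)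
  define X where "X = Smh o\<^sub>L T o\<^sub>L Smh"
  have PX: "positive_op X" unfolding X_def by (rule positive_sandwich[OF saSmh PT])
  have IX: "invertible_op X"
    unfolding invertible_op_def
  proof (intro exI conjI)
    show "X o\<^sub>L (Sh o\<^sub>L inv_op T o\<^sub>L Sh) = id_blinfun"
      by (rule blinfun_eqI) (simp add: X_def a1 a2 a4)
    show "(Sh o\<^sub>L inv_op T o\<^sub>L Sh) o\<^sub>L X = id_blinfun"
      by (rule blinfun_eqI) (simp add: X_def a1 a2 a5)
  qed
  have TX: "T = Sh o\<^sub>L X o\<^sub>L Sh" by (rule blinfun_eqI) (simp add: X_def a1 a2)
  define G where "G = (\<lambda>t. opfun (\<lambda>x. x powr t) X)"
  define L where "L = opfun (fWYD 0) X"
  define F where "F = opfun (fWYD p) X"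
  have wg: "wgmean S t T = Sh o\<^sub>L G t o\<^sub>L Sh" for t
    unfolding wgmean_def Let_def Sh_def[symmetric] Smh_def[symmetric] X_def[symmetric] G_def ..
  have gm: "gmean S T = Sh o\<^sub>L G (1/2) o\<^sub>L Sh" unfolding gmean_def wg ..
  have wy: "WYD p S T = Sh o\<^sub>L F o\<^sub>L Sh"
    unfolding WYD_def Let_def Sh_def[symmetric] Smh_def[symmetric] X_def[symmetric] F_def ..
  have lm: "logmean S T = Sh o\<^sub>L L o\<^sub>L Sh"
  proof -
    define h where "h = (\<lambda>B. Sh o\<^sub>L B o\<^sub>L Sh)"
    have bl: "bounded_linear h"
    proof -
      have "bounded_linear (\<lambda>B. Sh o\<^sub>L B)" by (rule bounded_bilinear.bounded_linear_right[OF bounded_bilinear_blinfun_compose])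
      moreover have "bounded_linear (\<lambda>B. B o\<^sub>L Sh)" by (rule bounded_bilinear.bounded_linear_left[OF bounded_bilinear_blinfun_compose])
      ultimately show ?thesis unfolding h_def using bounded_linear_compose[of "\<lambda>B. B o\<^sub>L Sh" "\<lambda>B. Sh o\<^sub>L B"] by blast
    qed
    have "((h \<circ> G) has_integral h L) {0..1}"
      by (rule has_integral_linear[OF _ bl]) (unfold G_def L_def, rule opfun_powr_integral[OF PX IX nt])
    then have "integral {0..1} (h \<circ> G) = h L" by (rule integral_unique)
    moreover have "h \<circ> G = (\<lambda>t. wgmean S t T)" by (rule ext) (simp add: h_def wg)
    ultimately show ?thesis unfolding logmean_def by (simp add: h_def)
  qed
  define c where "c = 2 * p * (1 - p)"
  define M where "M = c *\<^sub>R ((1/2) *\<^sub>R (id_blinfun + X) - G (1/2)) + (L - F)"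
  have key: "(c *\<^sub>R (amean S T - gmean S T) + logmean S T) - WYD p S T = Sh o\<^sub>L M o\<^sub>L Sh"
  proof (rule blinfun_eqI)
    fix v
    have "S v = Sh (Sh v)" by (simp add: a3)
    moreover have "T v = Sh (X (Sh v))" by (subst TX) simp
    ultimately show "((c *\<^sub>R (amean S T - gmean S T) + logmean S T) - WYD p S T) v = (Sh o\<^sub>L M o\<^sub>L Sh) v"
      by (simp add: amean_def gm lm wy M_def blinfun.bilinear_simps)
  qed
  have hM: "M = opfun (\<lambda>x. c * ((1/2) * (1 + x) - x powr (1/2)) + (fWYD 0 x - fWYD p x)) X"
  proof -
    have c1: "continuous_on {0<..} (\<lambda>x::real. (1/2) * (1 + x) - x powr (1/2))" by (intro continuous_intros) auto
    have c2: "continuous_on {0<..} (\<lambda>x::real. (1/2) * (1 + x))" by (intro continuous_intros)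
    have c3: "continuous_on {0<..} (\<lambda>x::real. 1 + x)" by (intro continuous_intros)
    have c4: "continuous_on {0<..} (\<lambda>x::real. c * ((1/2) * (1 + x) - x powr (1/2)))" by (intro continuous_intros) auto
    have c5: "continuous_on {0<..} (\<lambda>x::real. fWYD 0 x - fWYD p x)"
      using fWYD_cont[OF p] fWYD_cont[of 0] by (intro continuous_intros) auto
    have "opfun (\<lambda>x. c * ((1/2) * (1 + x) - x powr (1/2)) + (fWYD 0 x - fWYD p x)) X
      = opfun (\<lambda>x. c * ((1/2) * (1 + x) - x powr (1/2))) X + opfun (\<lambda>x. fWYD 0 x - fWYD p x) X"
      by (rule opfun_add[OF PX IX nt c4 c5])
    also have "opfun (\<lambda>x. fWYD 0 x - fWYD p x) X = L - F"
      unfolding L_def F_def by (rule opfun_diff[OF PX IX nt fWYD_cont[of 0] fWYD_cont[OF p]]) auto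
    also have "opfun (\<lambda>x. c * ((1/2) * (1 + x) - x powr (1/2))) X = c *\<^sub>R opfun (\<lambda>x. (1/2) * (1 + x) - x powr (1/2)) X"
      by (rule opfun_scale[OF PX IX nt c1])
    also have "opfun (\<lambda>x. (1/2) * (1 + x) - x powr (1/2)) X = opfun (\<lambda>x. (1/2) * (1 + x)) X - G (1/2)"
      unfolding G_def by (rule opfun_diff[OF PX IX nt c2 cont_powr])
    also have "opfun (\<lambda>x. (1/2) * (1 + x)) X = (1/2) *\<^sub>R opfun (\<lambda>x. 1 + x) X"
      by (rule opfun_scale[OF PX IX nt c3])
    also have "opfun (\<lambda>x. 1 + x) X = opfun (\<lambda>x. 1) X + opfun (\<lambda>x. x) X"
      by (rule opfun_add[OF PX IX nt]) (intro continuous_intros)+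
    also have "\<dots> = id_blinfun + X" using opfun_const[OF PX IX nt, of 1] opfun_id[OF PX IX nt] by simp
    finally show ?thesis by (simp add: M_def)
  qed
  have PM: "positive_op M"
    unfolding hM
  proof (rule opfun_pos[OF PX IX nt cont_fWYD_h[OF p]])
    fix x :: real assume x: "0 < x"
    have "fWYD p x \<le> 2 * p * (1 - p) * ((1 + x) / 2 - x powr (1/2)) + fWYD 0 x"
      by (rule fWYD_ineq[OF x p])
    then show "0 \<le> c * ((1/2) * (1 + x) - x powr (1/2)) + (fWYD 0 x - fWYD p x)"
      by (simp add: c_def)
  qed
  show ?thesis
    unfolding loewner_le_def c_def[symmetric] key
    by (rule positive_sandwich[OF saSh PM])
qed


end
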